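(* Let $X=[0,\infty)\subset\mathbb{R}$ and $\mathcal{A}=\{\alpha_1,\dots,\alpha_m\}\subset\mathbb{R}$ with $\alpha_1<\cdots<\alpha_m$. The extreme rays of $C_{[0,\infty)}(\mathcal{A})$ are exactly the rays $\{tf:t\ge0\}$ generated by the following functions of $x\in\mathbb{R}$: (1) $f(x)=\exp(\alpha_1x)$; (2) $f(x)=\exp(\alpha_2x)-\exp(\alpha_1x)$ (when $m\ge2$); (3) for each $2\le i\le m-1$, $f(x)=c_{i+1}\exp(\alpha_{i+1}x)+c_i\exp(\alpha_ix)+c_{i-1}\exp(\alpha_{i-1}x)$ with $c_{i+1}>0$, $c_{i-1}>0$ and \[c_i=-\Big(\frac{c_{i-1}}{\lambda_{i-1}}\Big)^{\lambda_{i-1}}\Big(\frac{c_{i+1}}{\lambda_{i+1}}\Big)^{\lambda_{i+1}},\qquad \lambda_{i+1}=\frac{\alpha_i-\alpha_{i-1}}{\alpha_{i+1}-\alpha_{i-1}},\quad \lambda_{i-1}=\frac{\alpha_{i+1}-\alpha_i}{\alpha_{i+1}-\alpha_{i-1}},\] subject to $\dfrac{c_{i-1}}{c_{i+1}}\ge\dfrac{\lambda_{i-1}}{\lambda_{i+1}}$.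
   Context: Signomials supported on a finite set $\mathcal{A}\subset\mathbb{R}$ are functions $f(x)=\sum_{\alpha\in\mathcal{A}}c_\alpha\exp(\alpha x)$, identified with coefficient vectors $c\in\mathbb{R}^{\mathcal{A}}$. For $X\subset\mathbb{R}$ and $\beta\in\mathcal{A}$, the $X$-AGE cone $C_X(\mathcal{A},\beta)$ is the set of signomials supported on $\mathcal{A}$ that are nonnegative on $X$ and have $c_\alpha\ge0$ for all $\alpha\ne\beta$; the $X$-SAGE cone is the Minkowski sum $C_X(\mathcal{A})=\sum_{\beta\in\mathcal{A}}C_X(\mathcal{A},\beta)$. *)

theory Defs
  imports "HOL-Analysis.Analysis"
begin

text \<open>Signomials supported on a finite set A of reals are identified with their
coefficient vectors c :: real \<Rightarrow> real, required to vanish outside A.\<close>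

definition supported_on :: "real set \<Rightarrow> (real \<Rightarrow> real) \<Rightarrow> bool" where
  "supported_on A c \<longleftrightarrow> (\<forall>a. a \<notin> A \<longrightarrow> c a = 0)"

definition signomial :: "real set \<Rightarrow> (real \<Rightarrow> real) \<Rightarrow> real \<Rightarrow> real" where
  "signomial A c x = (\<Sum>a\<in>A. c a * exp (a * x))"

definition AGE_cone :: "real set \<Rightarrow> real set \<Rightarrow> real \<Rightarrow> (real \<Rightarrow> real) set" where
  "AGE_cone X A \<beta> = {c. supported_on A c \<and> (\<forall>x\<in>X. signomial A c x \<ge> 0)
                        \<and> (\<forall>a\<in>A. a \<noteq> \<beta> \<longrightarrow> c a \<ge> 0)}"

definition SAGE_cone :: "real set \<Rightarrow> real set \<Rightarrow> (real \<Rightarrow> real) set" where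
  "SAGE_cone X A = {c. \<exists>g. (\<forall>\<beta>\<in>A. g \<beta> \<in> AGE_cone X A \<beta>) \<and> c = (\<lambda>a. \<Sum>\<beta>\<in>A. g \<beta> a)}"

definition extreme_ray :: "(real \<Rightarrow> real) set \<Rightarrow> (real \<Rightarrow> real) \<Rightarrow> bool" where
  "extreme_ray K c \<longleftrightarrow> c \<in> K \<and> c \<noteq> (\<lambda>_. 0) \<and>
     (\<forall>g h. g \<in> K \<and> h \<in> K \<and> c = (\<lambda>a. g a + h a) \<longrightarrow>
        (\<exists>s\<ge>0. g = (\<lambda>a. s * c a)) \<and> (\<exists>s\<ge>0. h = (\<lambda>a. s * c a)))"

end

theory Submission
  imports Defs
begin


definition S1 :: "real set \<Rightarrow> (real \<Rightarrow> real) \<Rightarrow> real \<Rightarrow> real" where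
  "S1 A c x = (\<Sum>a\<in>A. c a * a * exp (a * x))"

definition ev :: "real \<Rightarrow> real \<Rightarrow> real" where
  "ev b = (\<lambda>a. if a = b then 1 else 0)"

lemma sig_add: "signomial A (\<lambda>a. c a + d a) x = signomial A c x + signomial A d x"
  by (simp add: signomial_def distrib_right sum.distrib)
lemma sig_diff: "signomial A (\<lambda>a. c a - d a) x = signomial A c x - signomial A d x"
  by (simp add: signomial_def left_diff_distrib sum_subtractf)
lemma sig_scale: "signomial A (\<lambda>a. s * c a) x = s * signomial A c x"
  by (simp add: signomial_def sum_distrib_left mult.assoc)
lemma sig_sum: "signomial A (\<lambda>a. \<Sum>i\<in>I. p i a) x = (\<Sum>i\<in>I. signomial A (p i) x)"
  by (simp add: signomial_def sum_distrib_right sum.swap[of _ I])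
lemma S1_add: "S1 A (\<lambda>a. c a + d a) x = S1 A c x + S1 A d x"
  by (simp add: S1_def distrib_right sum.distrib)
lemma S1_diff: "S1 A (\<lambda>a. c a - d a) x = S1 A c x - S1 A d x"
  by (simp add: S1_def left_diff_distrib sum_subtractf)
lemma S1_scale: "S1 A (\<lambda>a. s * c a) x = s * S1 A c x"
  by (simp add: S1_def sum_distrib_left mult.assoc)
lemma S1_sum: "S1 A (\<lambda>a. \<Sum>i\<in>I. p i a) x = (\<Sum>i\<in>I. S1 A (p i) x)"
  by (simp add: S1_def sum_distrib_right sum.swap[of _ I])

lemma sig_ev: "finite A \<Longrightarrow> b \<in> A \<Longrightarrow> signomial A (ev b) x = exp (b * x)"
proof -
  assume "finite A" "b \<in> A"
  have "\<And>a. ev b a * exp (a * x) = (if a = b then exp (b * x) else 0)"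
    by (auto simp: ev_def)
  then show ?thesis using \<open>finite A\<close> \<open>b \<in> A\<close> by (simp add: signomial_def)
qed
lemma S1_ev: "finite A \<Longrightarrow> b \<in> A \<Longrightarrow> S1 A (ev b) x = b * exp (b * x)"
proof -
  assume "finite A" "b \<in> A"
  have "\<And>a. ev b a * a * exp (a * x) = (if a = b then b * exp (b * x) else 0)"
    by (auto simp: ev_def)
  then show ?thesis using \<open>finite A\<close> \<open>b \<in> A\<close> by (simp add: S1_def)
qed

lemma sig_deriv: "(signomial A c has_real_derivative S1 A c x) (at x)"
  unfolding signomial_def S1_def
  by (auto intro!: derivative_eq_intros simp: algebra_simps)

lemma sig_cont: "continuous_on S (signomial A c)"
  unfolding signomial_def by (intro continuous_intros)

lemma S1_shift: "S1 A c x - \<beta> * signomial A c x = (\<Sum>a\<in>A. c a * (a - \<beta>) * exp (a * x))"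
  by (simp add: S1_def signomial_def sum_distrib_left sum_subtractf[symmetric] algebra_simps)

lemma coreG:
  assumes "\<And>a. a \<in> A \<Longrightarrow> a \<noteq> \<beta> \<Longrightarrow> c a \<ge> 0"
  shows "signomial A c x \<ge> exp (\<beta> * (x - x0)) *
           (signomial A c x0 + (x - x0) * (S1 A c x0 - \<beta> * signomial A c x0))"
proof -
  have "exp (\<beta> * (x - x0)) * (signomial A c x0 + (x - x0) * (S1 A c x0 - \<beta> * signomial A c x0))
      = (\<Sum>a\<in>A. c a * exp (a * x0) * exp (\<beta> * (x - x0)) * (1 + (a - \<beta>) * (x - x0)))"
    unfolding S1_shift by (simp add: signomial_def sum_distrib_left sum_distrib_right
          sum.distrib[symmetric] algebra_simps)
  also have "\<dots> \<le> (\<Sum>a\<in>A. c a * exp (a * x))"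
  proof (rule sum_mono)
    fix a assume a: "a \<in> A"
    have e: "exp (a * x) = exp (a * x0) * exp (\<beta> * (x - x0)) * exp ((a - \<beta>) * (x - x0))"
      by (simp add: exp_add[symmetric] algebra_simps)
    show "c a * exp (a * x0) * exp (\<beta> * (x - x0)) * (1 + (a - \<beta>) * (x - x0)) \<le> c a * exp (a * x)"
    proof (cases "a = \<beta>")
      case True then show ?thesis by (simp add: mult.assoc exp_add[symmetric] algebra_simps)
    next
      case False
      have "0 \<le> c a * exp (a * x0) * exp (\<beta> * (x - x0))" using assms[OF a False] by simp
      from mult_left_mono[OF exp_ge_add_one_self this, of "(a - \<beta>) * (x - x0)"]
      show ?thesis by (simp add: e mult.assoc)
    qed
  qed
  finally show ?thesis by (simp add: signomial_def)
qed


lemma G0: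
  assumes "\<And>a. a \<in> A \<Longrightarrow> a \<noteq> \<beta> \<Longrightarrow> c a \<ge> 0" "signomial A c x0 = 0" "S1 A c x0 = 0"
  shows "signomial A c x \<ge> 0"
  using coreG[of A \<beta> c x x0] assms by simp

lemma G1:
  assumes "\<And>a. a \<in> A \<Longrightarrow> a \<noteq> \<beta> \<Longrightarrow> c a \<ge> 0" "signomial A c x0 \<ge> 0"
    "S1 A c x0 - \<beta> * signomial A c x0 \<ge> 0" "x \<ge> x0"
  shows "signomial A c x \<ge> 0"
proof -
  have "0 \<le> exp (\<beta> * (x - x0)) * (signomial A c x0 + (x - x0) * (S1 A c x0 - \<beta> * signomial A c x0))"
    using assms by (intro mult_nonneg_nonneg add_nonneg_nonneg) auto
  with coreG[of A \<beta> c x x0, OF assms(1)] show ?thesis by linarith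
qed

lemma AGE_I:
  assumes "supported_on A c" "\<And>a. a \<in> A \<Longrightarrow> a \<noteq> \<beta> \<Longrightarrow> c a \<ge> 0" "\<And>x. x \<ge> 0 \<Longrightarrow> signomial A c x \<ge> 0"
  shows "c \<in> AGE_cone {0..} A \<beta>"
  using assms by (auto simp: AGE_cone_def)

lemma AGE_D:
  assumes "c \<in> AGE_cone X A \<beta>"
  shows "supported_on A c" "\<And>a. a \<in> A \<Longrightarrow> a \<noteq> \<beta> \<Longrightarrow> c a \<ge> 0" "\<And>x. x \<in> X \<Longrightarrow> signomial A c x \<ge> 0"
  using assms by (auto simp: AGE_cone_def)

lemma AGE_zero: "(\<lambda>_. 0) \<in> AGE_cone X A \<beta>"
  by (auto simp: AGE_cone_def supported_on_def signomial_def)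

lemma AGE_scale: "c \<in> AGE_cone X A \<beta> \<Longrightarrow> s \<ge> 0 \<Longrightarrow> (\<lambda>a. s * c a) \<in> AGE_cone X A \<beta>"
  by (auto simp: AGE_cone_def supported_on_def sig_scale)

lemma AGE_in_SAGE:
  assumes "finite A" "\<beta> \<in> A" "p \<in> AGE_cone X A \<beta>"
  shows "p \<in> SAGE_cone X A"
proof -
  let ?g = "\<lambda>b a. if b = \<beta> then p a else 0"
  have "\<forall>b\<in>A. ?g b \<in> AGE_cone X A b"
  proof
    fix b assume "b \<in> A"
    show "?g b \<in> AGE_cone X A b"
    proof (cases "b = \<beta>")
      case True then show ?thesis using assms by simp
    next
      case False then show ?thesis using AGE_zero by simp
    qed
  qed
  moreover have "p = (\<lambda>a. \<Sum>b\<in>A. ?g b a)"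
    using assms by (auto simp: if_distrib cong: if_cong)
  ultimately show ?thesis unfolding SAGE_cone_def
    by (intro CollectI exI[of _ ?g]) simp
qed

lemma NP:
  assumes "extreme_ray K c" "g \<in> K" "h \<in> K" "\<And>a. c a = g a + h a"
    "g z \<noteq> 0" "c z' \<noteq> 0" "g z' = 0"
  shows False
proof -
  have "c = (\<lambda>a. g a + h a)" using assms(4) by auto
  with assms(1-3) obtain s where "s \<ge> 0" "g = (\<lambda>a. s * c a)"
    unfolding extreme_ray_def by blast
  then have "s * c z' = 0" using assms(7) by metis
  then have "s = 0" using assms(6) by simp
  then show False using \<open>g = _\<close> assms(5) by simp
qed

lemma step1:
  assumes "finite A" "extreme_ray (SAGE_cone X A) c"
  shows "\<exists>\<beta>\<in>A. c \<in> AGE_cone X A \<beta>"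
proof -
  from assms(2) have cK: "c \<in> SAGE_cone X A" and cnz: "c \<noteq> (\<lambda>_. 0)"
    unfolding extreme_ray_def by auto
  then obtain g where g: "\<forall>\<beta>\<in>A. g \<beta> \<in> AGE_cone X A \<beta>" and ceq: "c = (\<lambda>a. \<Sum>\<beta>\<in>A. g \<beta> a)"
    unfolding SAGE_cone_def by blast
  have "\<exists>\<beta>0\<in>A. g \<beta>0 \<noteq> (\<lambda>_. 0)"
  proof (rule ccontr)
    assume "\<not> ?thesis"
    then have "c = (\<lambda>_. 0)" using ceq by auto
    with cnz show False by simp
  qed
  then obtain \<beta>0 where b0: "\<beta>0 \<in> A" "g \<beta>0 \<noteq> (\<lambda>_. 0)" by blast
  let ?g' = "g(\<beta>0 := (\<lambda>_. 0))"
  let ?h = "\<lambda>a. \<Sum>\<beta>\<in>A. ?g' \<beta> a"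
  have hK: "?h \<in> SAGE_cone X A"
    unfolding SAGE_cone_def apply (rule CollectI, rule exI[of _ ?g']) using g AGE_zero by auto
  have "c = (\<lambda>a. g \<beta>0 a + ?h a)"
  proof
    fix a
    have "(\<Sum>\<beta>\<in>A. g \<beta> a) = g \<beta>0 a + (\<Sum>\<beta>\<in>A - {\<beta>0}. g \<beta> a)"
      using assms(1) b0(1) by (simp add: sum.remove)
    moreover have "(\<Sum>\<beta>\<in>A. ?g' \<beta> a) = (\<Sum>\<beta>\<in>A - {\<beta>0}. g \<beta> a)"
      using assms(1) b0(1) by (simp add: sum.remove)
    ultimately show "c a = g \<beta>0 a + ?h a" using ceq by simp
  qed
  moreover have "g \<beta>0 \<in> SAGE_cone X A" using AGE_in_SAGE assms(1) b0(1) g by blast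
  ultimately obtain s where s: "s \<ge> 0" "g \<beta>0 = (\<lambda>a. s * c a)"
    using assms(2) hK unfolding extreme_ray_def by blast
  then have "s \<noteq> 0" using b0(2) by auto
  then have "c = (\<lambda>a. (1/s) * g \<beta>0 a)" using s by auto
  then have "c \<in> AGE_cone X A \<beta>0" using AGE_scale[of "g \<beta>0" X A \<beta>0 "1/s"] g b0 s by auto
  then show ?thesis using b0 by blast
qed


lemma exp_lin_to_0:
  fixes a M :: real assumes "a < M"
  shows "((\<lambda>x. exp ((a - M) * x)) \<longlongrightarrow> 0) at_top"
proof -
  have "filterlim (\<lambda>x. (a - M) * x) at_bot at_top"
    using filterlim_tendsto_neg_mult_at_bot[OF tendsto_const[of "a - M"] _ filterlim_ident] assms
    by simp
  from filterlim_compose[OF exp_at_bot this] show ?thesis by (simp add: o_def)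
qed

lemma LC:
  assumes "finite A" "\<And>x. x \<ge> 0 \<Longrightarrow> signomial A c x \<ge> 0" "M \<in> A" "c M \<noteq> 0"
    "\<And>a. a \<in> A \<Longrightarrow> a > M \<Longrightarrow> c a = 0"
  shows "c M > 0"
proof (rule ccontr)
  assume "\<not> c M > 0"
  with assms(4) have neg: "c M < 0" by simp
  let ?R = "\<lambda>x. \<Sum>a\<in>A - {M}. c a * exp ((a - M) * x)"
  have "(?R \<longlongrightarrow> 0) at_top"
  proof (rule tendsto_null_sum)
    fix a assume a: "a \<in> A - {M}"
    show "((\<lambda>x. c a * exp ((a - M) * x)) \<longlongrightarrow> 0) at_top"
    proof (cases "c a = 0")
      case True then show ?thesis by simp
    next
      case False
      then have "a < M" using assms(5)[of a] a by force
      from tendsto_mult_right_zero[OF exp_lin_to_0[OF this]] show ?thesis by simp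
    qed
  qed
  then have "((\<lambda>x. c M + ?R x) \<longlongrightarrow> c M + 0) at_top" by (intro tendsto_add tendsto_const)
  then have "eventually (\<lambda>x. c M + ?R x < 0) at_top" using neg by (simp add: order_tendstoD(2))
  moreover have "eventually (\<lambda>x. x \<ge> (0::real)) at_top" by (rule eventually_ge_at_top)
  ultimately have "eventually (\<lambda>x. c M + ?R x < 0 \<and> x \<ge> 0) at_top" by (rule eventually_conj)
  then obtain x where x: "c M + ?R x < 0" "x \<ge> 0" by (auto simp: eventually_at_top_linorder)
  have "signomial A c x = c M * exp (M * x) + (\<Sum>a\<in>A - {M}. c a * exp (a * x))"
    using assms(1,3) by (simp add: signomial_def sum.remove)
  also have "(\<Sum>a\<in>A - {M}. c a * exp (a * x)) = exp (M * x) * ?R x"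
    by (simp add: sum_distrib_left algebra_simps exp_add[symmetric])
  finally have "signomial A c x = exp (M * x) * (c M + ?R x)" by (simp add: algebra_simps)
  also have "\<dots> < 0" using x by (simp add: mult_pos_neg)
  finally show False using assms(2)[OF x(2)] by simp
qed

lemma PL:
  assumes "finite A" "supported_on A c" "\<And>x. x \<ge> 0 \<Longrightarrow> signomial A c x \<ge> 0"
    "\<And>a. a \<in> A \<Longrightarrow> a \<noteq> \<beta> \<Longrightarrow> c a \<ge> 0" "c \<beta> < 0"
  shows "\<exists>a\<in>A. a > \<beta> \<and> c a > 0"
proof -
  let ?S = "{a\<in>A. c a \<noteq> 0}"
  have bA: "\<beta> \<in> A" using assms(2,5) unfolding supported_on_def by force
  have fin: "finite ?S" using assms(1) by simp
  have bS: "\<beta> \<in> ?S" using bA assms(5) by simp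
  define M where "M = Max ?S"
  have MS: "M \<in> ?S" unfolding M_def using fin bS by (intro Max_in) auto
  have bM: "\<beta> \<le> M" unfolding M_def using fin bS by simp
  have "c M > 0"
  proof (rule LC[OF assms(1,3)])
    show "M \<in> A" "c M \<noteq> 0" using MS by auto
    fix a assume "a \<in> A" "M < a"
    then show "c a = 0" using Max_ge[OF fin, of a] unfolding M_def by force
  qed
  then have "M \<noteq> \<beta>" using assms(5) by auto
  then show ?thesis using \<open>c M > 0\<close> MS bM by force
qed

lemma PM:
  assumes "finite A" "supported_on A p" "\<And>a. a \<in> A \<Longrightarrow> a \<noteq> \<beta> \<Longrightarrow> p a \<ge> 0"
    "signomial A p x0 = 0" "S1 A p x0 = 0" "p z \<noteq> 0"
  shows "p \<beta> < 0" "\<exists>a\<in>A. a < \<beta> \<and> p a > 0" "\<exists>a\<in>A. a > \<beta> \<and> p a > 0"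
proof -
  have zA: "z \<in> A" using assms(2,6) unfolding supported_on_def by blast
  show neg: "p \<beta> < 0"
  proof (rule ccontr)
    assume "\<not> p \<beta> < 0"
    then have nn: "\<And>a. a \<in> A \<Longrightarrow> 0 \<le> p a * exp (a * x0)" using assms(3) by (metis mult_nonneg_nonneg exp_ge_zero not_le)
    have "\<forall>a\<in>A. p a * exp (a * x0) = 0"
      using assms(4) sum_nonneg_eq_0_iff[OF assms(1), of "\<lambda>a. p a * exp (a * x0)"] nn unfolding signomial_def by blast
    then show False using zA assms(6) by simp
  qed
  have bA: "\<beta> \<in> A" using assms(2) neg unfolding supported_on_def by force
  have sh: "(\<Sum>a\<in>A. p a * (a - \<beta>) * exp (a * x0)) = 0" using S1_shift[of A p x0 \<beta>] assms(4,5) by simp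
  show "\<exists>a\<in>A. a < \<beta> \<and> p a > 0"
  proof (rule ccontr)
    assume H: "\<not> ?thesis"
    have nn: "\<And>a. a \<in> A \<Longrightarrow> 0 \<le> p a * (a - \<beta>) * exp (a * x0)"
    proof -
      fix a assume a: "a \<in> A"
      show "0 \<le> p a * (a - \<beta>) * exp (a * x0)"
      proof (cases "a < \<beta>")
        case True then have "p a = 0" using H a assms(3)[of a] by force
        then show ?thesis by simp
      next
        case False then show ?thesis using assms(3)[OF a] by (cases "a = \<beta>") auto
      qed
    qed
    have z: "\<forall>a\<in>A. p a * (a - \<beta>) * exp (a * x0) = 0"
      using sh sum_nonneg_eq_0_iff[OF assms(1), of "\<lambda>a. p a * (a - \<beta>) * exp (a * x0)"] nn by blast
    have "\<forall>a\<in>A - {\<beta>}. p a = 0"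
    proof
      fix a assume a: "a \<in> A - {\<beta>}"
      show "p a = 0"
      proof (cases "a < \<beta>")
        case True then show ?thesis using H a assms(3)[of a] by force
      next
        case False then show ?thesis using z a by auto
      qed
    qed
    then have "signomial A p x0 = p \<beta> * exp (\<beta> * x0)"
      using assms(1) bA by (simp add: signomial_def sum.remove)
    then show False using assms(4) neg by simp
  qed
  show "\<exists>a\<in>A. a > \<beta> \<and> p a > 0"
  proof (rule ccontr)
    assume H: "\<not> ?thesis"
    have nn: "\<And>a. a \<in> A \<Longrightarrow> 0 \<le> - (p a * (a - \<beta>) * exp (a * x0))"
    proof -
      fix a assume a: "a \<in> A"
      show "0 \<le> - (p a * (a - \<beta>) * exp (a * x0))"
      proof (cases "a > \<beta>")
        case True then have "p a = 0" using H a assms(3)[of a] by force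
        then show ?thesis by simp
      next
        case False
        show ?thesis
        proof (cases "a = \<beta>")
          case True then show ?thesis by simp
        next
          case F2: False
          have "p a * (a - \<beta>) \<le> 0" using assms(3)[OF a F2] False F2
            by (intro mult_nonneg_nonpos) auto
          then have "p a * (a - \<beta>) * exp (a * x0) \<le> 0" by (simp add: mult_nonpos_nonneg)
          then show ?thesis by simp
        qed
      qed
    qed
    have "(\<Sum>a\<in>A. - (p a * (a - \<beta>) * exp (a * x0))) = 0" using sh by (simp add: sum_negf)
    then have z: "\<forall>a\<in>A. - (p a * (a - \<beta>) * exp (a * x0)) = 0"
      using sum_nonneg_eq_0_iff[OF assms(1), of "\<lambda>a. - (p a * (a - \<beta>) * exp (a * x0))"] nn by blast
    have "\<forall>a\<in>A - {\<beta>}. p a = 0"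
    proof
      fix a assume a: "a \<in> A - {\<beta>}"
      show "p a = 0"
      proof (cases "a > \<beta>")
        case True then show ?thesis using H a assms(3)[of a] by force
      next
        case False then show ?thesis using z a by auto
      qed
    qed
    then have "signomial A p x0 = p \<beta> * exp (\<beta> * x0)"
      using assms(1) bA by (simp add: signomial_def sum.remove)
    then show False using assms(4) neg by simp
  qed
qed

lemma FAM_MAX:
  fixes p :: "'i \<Rightarrow> real \<Rightarrow> real"
  assumes "finite A" "finite I" "\<And>i a. i \<in> I \<Longrightarrow> a \<notin> A \<Longrightarrow> p i a = 0"
    "\<And>i a. i \<in> I \<Longrightarrow> a \<in> A \<Longrightarrow> a \<noteq> b i \<Longrightarrow> p i a \<ge> 0"
    "\<And>i. i \<in> I \<Longrightarrow> p i (b i) < 0 \<Longrightarrow> \<exists>a\<in>A. a > b i \<and> p i a \<noteq> 0"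
    "i0 \<in> I" "p i0 a0 \<noteq> 0"
  shows "\<exists>a'\<in>A. a0 \<le> a' \<and> (\<Sum>i\<in>I. p i a') > 0"
proof -
  let ?S = "{a\<in>A. \<exists>i\<in>I. p i a \<noteq> 0}"
  have fin: "finite ?S" using assms(1) by simp
  have a0S: "a0 \<in> ?S" using assms(3,6,7) by blast
  define M where "M = Max ?S"
  have MS: "M \<in> ?S" unfolding M_def using fin a0S by (intro Max_in) auto
  have aM: "a0 \<le> M" unfolding M_def using fin a0S by simp
  have nn: "\<And>i. i \<in> I \<Longrightarrow> p i M \<ge> 0"
  proof (rule ccontr)
    fix i assume i: "i \<in> I" and "\<not> p i M \<ge> 0"
    then have lt: "p i M < 0" by simp
    then have "M = b i" using assms(4)[OF i] MS by force
    with assms(5)[OF i] lt obtain a where "a \<in> A" "a > M" "p i a \<noteq> 0" by auto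
    then have "a \<in> ?S" using i by blast
    then have "a \<le> M" unfolding M_def using fin by simp
    with \<open>a > M\<close> show False by simp
  qed
  from MS obtain i1 where i1: "i1 \<in> I" "p i1 M \<noteq> 0" by blast
  then have "p i1 M > 0" using nn[OF i1(1)] by simp
  then have "(\<Sum>i\<in>I. p i M) > 0" using sum_pos2[OF assms(2) i1(1), of "\<lambda>i. p i M"] nn by blast
  then show ?thesis using MS aM by blast
qed

lemma FAM_MIN:
  fixes p :: "'i \<Rightarrow> real \<Rightarrow> real"
  assumes "finite A" "finite I" "\<And>i a. i \<in> I \<Longrightarrow> a \<notin> A \<Longrightarrow> p i a = 0"
    "\<And>i a. i \<in> I \<Longrightarrow> a \<in> A \<Longrightarrow> a \<noteq> b i \<Longrightarrow> p i a \<ge> 0"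
    "\<And>i. i \<in> I \<Longrightarrow> p i (b i) < 0 \<Longrightarrow> \<exists>a\<in>A. a < b i \<and> p i a \<noteq> 0"
    "i0 \<in> I" "p i0 a0 \<noteq> 0"
  shows "\<exists>a'\<in>A. a' \<le> a0 \<and> (\<Sum>i\<in>I. p i a') > 0"
proof -
  let ?S = "{a\<in>A. \<exists>i\<in>I. p i a \<noteq> 0}"
  have fin: "finite ?S" using assms(1) by simp
  have a0S: "a0 \<in> ?S" using assms(3,6,7) by blast
  define M where "M = Min ?S"
  have MS: "M \<in> ?S" unfolding M_def using fin a0S by (intro Min_in) auto
  have aM: "M \<le> a0" unfolding M_def using fin a0S by simp
  have nn: "\<And>i. i \<in> I \<Longrightarrow> p i M \<ge> 0"
  proof (rule ccontr)
    fix i assume i: "i \<in> I" and "\<not> p i M \<ge> 0"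
    then have lt: "p i M < 0" by simp
    then have "M = b i" using assms(4)[OF i] MS by force
    with assms(5)[OF i] lt obtain a where "a \<in> A" "a < M" "p i a \<noteq> 0" by auto
    then have "a \<in> ?S" using i by blast
    then have "M \<le> a" unfolding M_def using fin by simp
    with \<open>a < M\<close> show False by simp
  qed
  from MS obtain i1 where i1: "i1 \<in> I" "p i1 M \<noteq> 0" by blast
  then have "p i1 M > 0" using nn[OF i1(1)] by simp
  then have "(\<Sum>i\<in>I. p i M) > 0" using sum_pos2[OF assms(2) i1(1), of "\<lambda>i. p i M"] nn by blast
  then show ?thesis using MS aM by blast
qed

lemma EXT:
  assumes "finite A" "c \<in> SAGE_cone X A" "c \<noteq> (\<lambda>_. 0)"
    "\<And>(I::(real\<times>bool) set) b p. finite I \<Longrightarrow> (\<And>i. i \<in> I \<Longrightarrow> b i \<in> A \<and> p i \<in> AGE_cone X A (b i))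
       \<Longrightarrow> (\<And>a. (\<Sum>i\<in>I. p i a) = c a) \<Longrightarrow> (\<And>i. i \<in> I \<Longrightarrow> \<exists>s\<ge>0. p i = (\<lambda>a. s * c a))"
  shows "extreme_ray (SAGE_cone X A) c"
  unfolding extreme_ray_def
proof (intro conjI assms(2,3) allI impI)
  fix g h assume H: "g \<in> SAGE_cone X A \<and> h \<in> SAGE_cone X A \<and> c = (\<lambda>a. g a + h a)"
  then obtain G H' where G: "\<forall>\<beta>\<in>A. G \<beta> \<in> AGE_cone X A \<beta>" "g = (\<lambda>a. \<Sum>\<beta>\<in>A. G \<beta> a)"
    and H': "\<forall>\<beta>\<in>A. H' \<beta> \<in> AGE_cone X A \<beta>" "h = (\<lambda>a. \<Sum>\<beta>\<in>A. H' \<beta> a)"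
    unfolding SAGE_cone_def by blast
  let ?I = "A \<times> (UNIV :: bool set)"
  let ?p = "\<lambda>(i::real\<times>bool). if snd i then G (fst i) else H' (fst i)"
  have fin: "finite ?I" using assms(1) by simp
  have mem: "\<And>i. i \<in> ?I \<Longrightarrow> fst i \<in> A \<and> ?p i \<in> AGE_cone X A (fst i)" using G H' by auto
  have sum: "\<And>a. (\<Sum>i\<in>?I. ?p i a) = c a"
  proof -
    fix a
    have "(\<Sum>i\<in>?I. ?p i a) = (\<Sum>\<beta>\<in>A. \<Sum>t\<in>UNIV. ?p (\<beta>, t) a)"
      by (simp add: sum.cartesian_product case_prod_unfold cong: if_cong)
    also have "\<dots> = (\<Sum>\<beta>\<in>A. G \<beta> a + H' \<beta> a)" by (simp add: UNIV_bool add.commute)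
    also have "\<dots> = c a" using H G(2) H'(2) by (simp add: sum.distrib)
    finally show "(\<Sum>i\<in>?I. ?p i a) = c a" .
  qed
  have prp: "\<And>i. i \<in> ?I \<Longrightarrow> \<exists>s\<ge>0. ?p i = (\<lambda>a. s * c a)"
    using assms(4)[OF fin mem sum] by blast
  have "\<forall>\<beta>\<in>A. \<exists>s. s \<ge> 0 \<and> G \<beta> = (\<lambda>a. s * c a)"
  proof
    fix \<beta> assume "\<beta> \<in> A"
    then show "\<exists>s. s \<ge> 0 \<and> G \<beta> = (\<lambda>a. s * c a)" using prp[of "(\<beta>, True)"] by simp
  qed
  from bchoice[OF this] obtain sg where sg: "\<forall>\<beta>\<in>A. sg \<beta> \<ge> 0 \<and> G \<beta> = (\<lambda>a. sg \<beta> * c a)" by blast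
  have "\<forall>\<beta>\<in>A. \<exists>s. s \<ge> 0 \<and> H' \<beta> = (\<lambda>a. s * c a)"
  proof
    fix \<beta> assume "\<beta> \<in> A"
    then show "\<exists>s. s \<ge> 0 \<and> H' \<beta> = (\<lambda>a. s * c a)" using prp[of "(\<beta>, False)"] by simp
  qed
  from bchoice[OF this] obtain sh where sh: "\<forall>\<beta>\<in>A. sh \<beta> \<ge> 0 \<and> H' \<beta> = (\<lambda>a. sh \<beta> * c a)" by blast
  have g: "g = (\<lambda>a. (\<Sum>\<beta>\<in>A. sg \<beta>) * c a)" using G(2) sg by (auto simp: sum_distrib_right)
  have h: "h = (\<lambda>a. (\<Sum>\<beta>\<in>A. sh \<beta>) * c a)" using H'(2) sh by (auto simp: sum_distrib_right)
  have "(\<Sum>\<beta>\<in>A. sg \<beta>) \<ge> 0" "(\<Sum>\<beta>\<in>A. sh \<beta>) \<ge> 0" using sg sh by (auto intro: sum_nonneg)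
  then show "\<exists>s\<ge>0. g = (\<lambda>a. s * c a)" "\<exists>s\<ge>0. h = (\<lambda>a. s * c a)"
    using g h by blast+
qed



lemma three_ev:
  "l \<noteq> \<beta> \<Longrightarrow> l \<noteq> u \<Longrightarrow> \<beta> \<noteq> u \<Longrightarrow>
   (\<lambda>a. if a = u then cp else if a = \<beta> then ci else if a = l then cm else 0)
   = (\<lambda>a. cp * ev u a + ci * ev \<beta> a + cm * ev l a)"
  by (auto simp: ev_def)

lemma sig3:
  assumes "finite A" "l \<in> A" "\<beta> \<in> A" "u \<in> A" "l \<noteq> \<beta>" "l \<noteq> u" "\<beta> \<noteq> u"
  shows "signomial A (\<lambda>a. if a = u then cp else if a = \<beta> then ci else if a = l then cm else 0) x
     = cp * exp (u * x) + ci * exp (\<beta> * x) + cm * exp (l * x)"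
    "S1 A (\<lambda>a. if a = u then cp else if a = \<beta> then ci else if a = l then cm else 0) x
     = cp * u * exp (u * x) + ci * \<beta> * exp (\<beta> * x) + cm * l * exp (l * x)"
  unfolding three_ev[OF assms(5-7)]
  by (simp_all add: sig_add S1_add sig_scale S1_scale sig_ev S1_ev assms(1-4))

lemma alg3:
  fixes x y z x' y' z' u b l :: real
  assumes "x + y + z = 0" "x*u + y*b + z*l = 0" "x' + y' + z' = 0" "x'*u + y'*b + z'*l = 0"
    "x' \<noteq> 0" "l < b"
  shows "y = (x/x')*y'" "z = (x/x')*z'"
proof -
  have e1: "z * (b - l) = x * (u - b)" using assms(1,2)
    by (metis (no_types, opaque_lifting) add.commute add_diff_cancel_left' diff_zero mult.commute
        right_diff_distrib' add_diff_eq distrib_left mult_zero_left)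
  have e2: "z' * (b - l) = x' * (u - b)" using assms(3,4)
    by (metis (no_types, opaque_lifting) add.commute add_diff_cancel_left' diff_zero mult.commute
        right_diff_distrib' add_diff_eq distrib_left mult_zero_left)
  have bl: "b - l \<noteq> 0" using assms(6) by simp
  have z: "z = x * (u - b) / (b - l)" using e1 bl by (simp add: field_simps)
  have z': "z' = x' * (u - b) / (b - l)" using e2 bl by (simp add: field_simps)
  have "z * x' * (b - l) = x * z' * (b - l)"
    by (metis e1 e2 mult.commute mult.left_commute)
  then have "z * x' = x * z'" using bl by simp
  then show zz: "z = (x/x')*z'" using assms(5) by (simp add: field_simps)
  have y1: "y = - x - z" and y2: "y' = - x' - z'" using assms(1,3) by linarith+
  have "x' * y = x * y'" unfolding y1 y2 using \<open>z * x' = x * z'\<close> by (simp add: algebra_simps)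
  then show "y = (x/x')*y'" using assms(5) by (simp add: field_simps)
qed

lemma POW:
  fixes l \<beta> u x0 cp cm :: real
  assumes "l < \<beta>" "\<beta> < u" "cp > 0" "cm > 0"
    "cp * (u - \<beta>) * exp (u * x0) = cm * (\<beta> - l) * exp (l * x0)"
  shows "(cm / ((u - \<beta>) / (u - l))) powr ((u - \<beta>) / (u - l)) *
         (cp / ((\<beta> - l) / (u - l))) powr ((\<beta> - l) / (u - l))
       = (cp * exp (u * x0) + cm * exp (l * x0)) * exp (- \<beta> * x0)"
    "cm / cp \<ge> ((u - \<beta>) / (u - l)) / ((\<beta> - l) / (u - l)) \<longleftrightarrow> x0 \<ge> 0"
proof -
  define lp where "lp = (\<beta> - l) / (u - l)"
  define lm where "lm = (u - \<beta>) / (u - l)"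
  define S where "S = cp * exp (u * x0) + cm * exp (l * x0)"
  have ul: "u - l > 0" using assms by simp
  have lpp: "lp > 0" and lmp: "lm > 0" using assms unfolding lp_def lm_def by auto
  have Sp: "S > 0" unfolding S_def using assms by (simp add: add_pos_pos)
  have sum1: "lp + lm = 1" unfolding lp_def lm_def using ul by (simp add: add_divide_distrib[symmetric])
  have bar: "l * lm + u * lp = \<beta>"
  proof -
    have "l * lm + u * lp = (l * (u - \<beta>) + u * (\<beta> - l)) / (u - l)"
      unfolding lp_def lm_def by (simp add: add_divide_distrib)
    also have "l * (u - \<beta>) + u * (\<beta> - l) = \<beta> * (u - l)" by (simp add: algebra_simps)
    finally show ?thesis using ul by simp
  qed
  have cpS: "cp * exp (u * x0) = lp * S"
    unfolding lp_def S_def using assms(5) ul by (simp add: field_simps; simp add: algebra_simps)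
  have cmS: "cm * exp (l * x0) = lm * S"
    unfolding lm_def S_def using assms(5) ul by (simp add: field_simps; simp add: algebra_simps)
  have q1: "cp / lp = S * exp (- u * x0)" using cpS lpp by (simp add: field_simps exp_minus)
  have q2: "cm / lm = S * exp (- l * x0)" using cmS lmp by (simp add: field_simps exp_minus)
  have "(cm / lm) powr lm * (cp / lp) powr lp
       = (S powr lm * exp (- l * x0 * lm)) * (S powr lp * exp (- u * x0 * lp))"
    unfolding q1 q2 using Sp by (simp add: powr_def ln_mult flip: exp_add; simp add: algebra_simps)
  also have "\<dots> = S powr (lm + lp) * exp (- (l * lm + u * lp) * x0)"
    by (simp add: powr_add exp_add[symmetric] algebra_simps)
  also have "\<dots> = S * exp (- \<beta> * x0)" using sum1 bar Sp by (simp add: add.commute)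
  finally show "(cm / ((u - \<beta>) / (u - l))) powr ((u - \<beta>) / (u - l)) *
         (cp / ((\<beta> - l) / (u - l))) powr ((\<beta> - l) / (u - l))
       = (cp * exp (u * x0) + cm * exp (l * x0)) * exp (- \<beta> * x0)"
    unfolding lp_def lm_def S_def .
  have cp': "cp = lp * (S * exp (- u * x0))" using q1 lpp by (simp add: field_simps)
  have cm': "cm = lm * (S * exp (- l * x0))" using q2 lmp by (simp add: field_simps)
  have ee: "exp (- l * x0) / exp (- u * x0) = exp ((u - l) * x0)"
    by (simp add: exp_diff[symmetric] algebra_simps)
  have "cm / cp = (lm / lp) * (exp (- l * x0) / exp (- u * x0))"
    using Sp lpp lmp by (subst cp', subst cm') (simp add: field_simps)
  then have "cm / cp = (lm / lp) * exp ((u - l) * x0)" by (simp only: ee)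
  moreover have "lm / lp > 0" using lpp lmp by simp
  ultimately have "cm / cp \<ge> lm / lp \<longleftrightarrow> (lm / lp) * 1 \<le> (lm / lp) * exp ((u - l) * x0)"
    by simp
  also have "\<dots> \<longleftrightarrow> exp ((u - l) * x0) \<ge> 1"
    using \<open>lm / lp > 0\<close> mult_le_cancel_left_pos by blast
  also have "\<dots> \<longleftrightarrow> x0 \<ge> 0" using ul by (simp add: zero_le_mult_iff)
  finally show "cm / cp \<ge> ((u - \<beta>) / (u - l)) / ((\<beta> - l) / (u - l)) \<longleftrightarrow> x0 \<ge> 0"
    unfolding lp_def lm_def .
qed



lemma S1_min:
  assumes "\<And>x. x \<ge> x0 \<Longrightarrow> signomial A p x \<ge> 0" "signomial A p x0 = 0"
  shows "S1 A p x0 \<ge> 0"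
proof (rule ccontr)
  assume "\<not> S1 A p x0 \<ge> 0"
  then have "S1 A p x0 < 0" by simp
  from DERIV_neg_dec_right[OF sig_deriv this] obtain d where d: "d > 0"
    "\<And>h. h > 0 \<Longrightarrow> h < d \<Longrightarrow> signomial A p x0 > signomial A p (x0 + h)" by blast
  have "signomial A p (x0 + d/2) < 0" using d(2)[of "d/2"] d(1) assms(2) by simp
  moreover have "signomial A p (x0 + d/2) \<ge> 0" using assms(1) d(1) by simp
  ultimately show False by simp
qed

lemma GEN3:
  assumes fin: "finite A" and mem: "l \<in> A" "\<beta> \<in> A" "u \<in> A" and ord: "l < \<beta>" "\<beta> < u"
    and adj: "\<And>a. a \<in> A \<Longrightarrow> l \<le> a \<Longrightarrow> a \<le> u \<Longrightarrow> a = l \<or> a = \<beta> \<or> a = u"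
    and cdef: "c = (\<lambda>a. if a = u then cp else if a = \<beta> then ci else if a = l then cm else 0)"
    and pos: "cp > 0" "cm > 0" and x0: "x0 \<ge> 0"
    and m0: "signomial A c x0 = 0" and m1: "S1 A c x0 = 0"
  shows "extreme_ray (SAGE_cone {0..} A) c"
proof -
  have d: "l \<noteq> \<beta>" "l \<noteq> u" "\<beta> \<noteq> u" using ord by auto
  note s3 = sig3[OF fin mem d]
  have "cp * exp (u * x0) + ci * exp (\<beta> * x0) + cm * exp (l * x0) = 0"
    using m0 s3(1) cdef by simp
  moreover have "cp * exp (u * x0) + cm * exp (l * x0) > 0" using pos by (simp add: add_pos_pos)
  ultimately have "ci * exp (\<beta> * x0) < 0" by linarith
  then have ci_neg: "ci < 0" by (simp add: mult_less_0_iff)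
  have cAGE: "c \<in> AGE_cone {0..} A \<beta>"
  proof (rule AGE_I)
    show "supported_on A c" unfolding supported_on_def cdef using mem by auto
    show "\<And>a. a \<in> A \<Longrightarrow> a \<noteq> \<beta> \<Longrightarrow> 0 \<le> c a" unfolding cdef using pos by auto
    show "\<And>x. 0 \<le> x \<Longrightarrow> 0 \<le> signomial A c x"
      by (rule G0[of A \<beta> c x0, OF _ m0 m1]) (auto simp: cdef pos less_imp_le)
  qed
  have cpos: "\<And>a. c a > 0 \<Longrightarrow> a = l \<or> a = u" unfolding cdef using ci_neg
    by (auto split: if_splits)
  show ?thesis
  proof (rule EXT[OF fin AGE_in_SAGE[OF fin mem(2) cAGE]])
    show "c \<noteq> (\<lambda>_. 0)" using pos cdef by (metis less_irrefl)
    fix I :: "(real \<times> bool) set" and b p i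
    assume I: "finite I" and bp: "\<And>i. i \<in> I \<Longrightarrow> b i \<in> A \<and> p i \<in> AGE_cone {0..} A (b i)"
      and sm: "\<And>a. (\<Sum>i\<in>I. p i a) = c a" and i: "i \<in> I"
    have ceq: "c = (\<lambda>a. \<Sum>i\<in>I. p i a)" using sm by auto
    have supp: "\<And>i a. i \<in> I \<Longrightarrow> a \<notin> A \<Longrightarrow> p i a = 0"
      using bp unfolding AGE_cone_def supported_on_def by blast
    have coef: "\<And>i a. i \<in> I \<Longrightarrow> a \<in> A \<Longrightarrow> a \<noteq> b i \<Longrightarrow> p i a \<ge> 0"
      using bp unfolding AGE_cone_def by blast
    have nn: "\<And>i x. i \<in> I \<Longrightarrow> x \<ge> 0 \<Longrightarrow> signomial A (p i) x \<ge> 0"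
      using bp unfolding AGE_cone_def by auto
    have sumsig: "(\<Sum>i\<in>I. signomial A (p i) x0) = 0" using m0 unfolding ceq sig_sum .
    have z0: "\<And>i. i \<in> I \<Longrightarrow> signomial A (p i) x0 = 0"
      using sum_nonneg_eq_0_iff[OF I, of "\<lambda>i. signomial A (p i) x0"] sumsig nn x0 by auto
    have z1nn: "\<And>i. i \<in> I \<Longrightarrow> S1 A (p i) x0 \<ge> 0"
      using S1_min z0 nn x0 by (meson order_trans)
    have sumS1: "(\<Sum>i\<in>I. S1 A (p i) x0) = 0" using m1 unfolding ceq S1_sum .
    have z1: "\<And>i. i \<in> I \<Longrightarrow> S1 A (p i) x0 = 0"
      using sum_nonneg_eq_0_iff[OF I, of "\<lambda>i. S1 A (p i) x0"] sumS1 z1nn by auto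
    have supp_i: "\<And>i. i \<in> I \<Longrightarrow> supported_on A (p i)"
      using bp unfolding AGE_cone_def by blast
    have PMi: "\<And>i. i \<in> I \<Longrightarrow> p i (b i) < 0 \<Longrightarrow>
        (\<exists>a\<in>A. a < b i \<and> p i a > 0) \<and> (\<exists>a\<in>A. a > b i \<and> p i a > 0)"
    proof -
      fix i assume i: "i \<in> I" and neg: "p i (b i) < 0"
      have "p i (b i) \<noteq> 0" using neg by simp
      from PM[OF fin supp_i[OF i] coef[OF i] z0[OF i] z1[OF i] this]
      show "(\<exists>a\<in>A. a < b i \<and> p i a > 0) \<and> (\<exists>a\<in>A. a > b i \<and> p i a > 0)" by blast
    qed
    have QM: "\<And>i. i \<in> I \<Longrightarrow> p i (b i) < 0 \<Longrightarrow> \<exists>a\<in>A. b i < a \<and> p i a \<noteq> 0"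
      using PMi by fastforce
    have Qm: "\<And>i. i \<in> I \<Longrightarrow> p i (b i) < 0 \<Longrightarrow> \<exists>a\<in>A. a < b i \<and> p i a \<noteq> 0"
      using PMi by fastforce
    have supp3: "\<And>a. p i a \<noteq> 0 \<Longrightarrow> a = l \<or> a = \<beta> \<or> a = u"
    proof -
      fix a assume a: "p i a \<noteq> 0"
      have aA: "a \<in> A" using supp[OF i] a by blast
      obtain a' where a': "a' \<in> A" "a \<le> a'" "(\<Sum>i\<in>I. p i a') > 0"
        using FAM_MAX[where A=A and I=I and p=p and b=b, OF fin I supp coef QM i a] by blast
      then have "a' = l \<or> a' = u" using cpos sm by auto
      then have au: "a \<le> u" using a'(2) ord by auto
      obtain a'' where a'': "a'' \<in> A" "a'' \<le> a" "(\<Sum>i\<in>I. p i a'') > 0"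
        using FAM_MIN[where A=A and I=I and p=p and b=b, OF fin I supp coef Qm i a] by blast
      then have "a'' = l \<or> a'' = u" using cpos sm by auto
      then have la: "l \<le> a" using a''(2) ord by auto
      show "a = l \<or> a = \<beta> \<or> a = u" using adj[OF aA la au] .
    qed
    show "\<exists>s\<ge>0. p i = (\<lambda>a. s * c a)"
    proof (cases "\<exists>z. p i z \<noteq> 0")
      case False
      then show ?thesis by (intro exI[of _ 0]) auto
    next
      case True
      then obtain z where z: "p i z \<noteq> 0" by blast
      note pm = PM[OF fin supp_i[OF i] coef[OF i] z0[OF i] z1[OF i] z]
      obtain a1 where a1: "a1 \<in> A" "a1 < b i" "p i a1 > 0" using pm(2) by blast
      obtain a2 where a2: "a2 \<in> A" "a2 > b i" "p i a2 > 0" using pm(3) by blast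
      have "b i = l \<or> b i = \<beta> \<or> b i = u" using supp3 pm(1) by force
      moreover have "a1 = l \<or> a1 = \<beta> \<or> a1 = u" using supp3 a1(3) by force
      moreover have "a2 = l \<or> a2 = \<beta> \<or> a2 = u" using supp3 a2(3) by force
      ultimately have bi: "b i = \<beta>" using a1(2) a2(2) ord by auto
      define P where "P = p i"
      have Peq: "P = (\<lambda>a. if a = u then P u else if a = \<beta> then P \<beta> else if a = l then P l else 0)"
        using supp3 unfolding P_def by fastforce
      have "P u \<ge> 0" using coef[OF i mem(3)] bi d unfolding P_def by auto
      have e1: "P u * exp (u * x0) + P \<beta> * exp (\<beta> * x0) + P l * exp (l * x0) = 0"
        using z0[OF i] sig3(1)[OF fin mem d, of "P u" "P \<beta>" "P l" x0] Peq unfolding P_def by simp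
      have e2: "(P u * exp (u * x0)) * u + (P \<beta> * exp (\<beta> * x0)) * \<beta> + (P l * exp (l * x0)) * l = 0"
        using z1[OF i] sig3(2)[OF fin mem d, of "P u" "P \<beta>" "P l" x0] Peq unfolding P_def
        by (simp add: algebra_simps)
      have e3: "cp * exp (u * x0) + ci * exp (\<beta> * x0) + cm * exp (l * x0) = 0"
        using m0 s3(1) cdef by simp
      have e4: "(cp * exp (u * x0)) * u + (ci * exp (\<beta> * x0)) * \<beta> + (cm * exp (l * x0)) * l = 0"
        using m1 s3(2) cdef by (simp add: algebra_simps)
      have nz: "cp * exp (u * x0) \<noteq> 0" using pos by simp
      note al = alg3[OF e1 e2 e3 e4 nz ord(1)]
      have r: "P u * exp (u * x0) / (cp * exp (u * x0)) = P u / cp" by simp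
      have "P \<beta> * exp (\<beta> * x0) = ((P u / cp) * ci) * exp (\<beta> * x0)"
        using al(1) unfolding r by (simp only: mult.assoc)
      then have Pb: "P \<beta> = (P u / cp) * ci" by (metis exp_not_eq_zero mult_right_cancel)
      have "P l * exp (l * x0) = ((P u / cp) * cm) * exp (l * x0)"
        using al(2) unfolding r by (simp only: mult.assoc)
      then have Pl: "P l = (P u / cp) * cm" by (metis exp_not_eq_zero mult_right_cancel)
      have "p i = (\<lambda>a. (P u / cp) * c a)"
      proof
        fix a
        show "p i a = (P u / cp) * c a"
          using pos Pb Pl unfolding P_def[symmetric] cdef
          by (subst Peq) (auto simp: field_simps)
      qed
      moreover have "P u / cp \<ge> 0" using \<open>P u \<ge> 0\<close> pos by simp
      ultimately show ?thesis by blast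
    qed
  qed
qed


lemma sig_nonneg_coef: "(\<And>a. a \<in> A \<Longrightarrow> c a \<ge> 0) \<Longrightarrow> signomial A c x \<ge> 0"
  unfolding signomial_def by (intro sum_nonneg) auto

lemma pieces_facts:
  assumes fin: "finite A" and I: "finite I"
    and bp: "\<And>i. i \<in> I \<Longrightarrow> b i \<in> A \<and> p i \<in> AGE_cone {0..} A (b i)"
  shows "\<And>i a. i \<in> I \<Longrightarrow> a \<notin> A \<Longrightarrow> p i a = 0"
    "\<And>i a. i \<in> I \<Longrightarrow> a \<in> A \<Longrightarrow> a \<noteq> b i \<Longrightarrow> p i a \<ge> 0"
    "\<And>i x. i \<in> I \<Longrightarrow> x \<ge> 0 \<Longrightarrow> signomial A (p i) x \<ge> 0"
    "\<And>i. i \<in> I \<Longrightarrow> p i (b i) < 0 \<Longrightarrow> \<exists>a\<in>A. b i < a \<and> p i a \<noteq> 0"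
proof -
  show supp: "\<And>i a. i \<in> I \<Longrightarrow> a \<notin> A \<Longrightarrow> p i a = 0"
    using bp unfolding AGE_cone_def supported_on_def by blast
  show coef: "\<And>i a. i \<in> I \<Longrightarrow> a \<in> A \<Longrightarrow> a \<noteq> b i \<Longrightarrow> p i a \<ge> 0"
    using bp unfolding AGE_cone_def by blast
  show nn: "\<And>i x. i \<in> I \<Longrightarrow> x \<ge> 0 \<Longrightarrow> signomial A (p i) x \<ge> 0"
    using bp unfolding AGE_cone_def by auto
  show "\<And>i. i \<in> I \<Longrightarrow> p i (b i) < 0 \<Longrightarrow> \<exists>a\<in>A. b i < a \<and> p i a \<noteq> 0"
  proof -
    fix i assume i: "i \<in> I" and neg: "p i (b i) < 0"
    have "supported_on A (p i)" using bp[OF i] unfolding AGE_cone_def by blast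
    from PL[OF fin this nn[OF i] coef[OF i] neg]
    show "\<exists>a\<in>A. b i < a \<and> p i a \<noteq> 0" by force
  qed
qed

lemma GEN1:
  assumes fin: "finite A" and a1: "a1 \<in> A" and mn: "\<And>a. a \<in> A \<Longrightarrow> a1 \<le> a" and t: "t > 0"
    and cdef: "c = (\<lambda>a. t * (if a = a1 then 1 else 0))"
  shows "extreme_ray (SAGE_cone {0..} A) c"
proof -
  have cAGE: "c \<in> AGE_cone {0..} A a1"
  proof (rule AGE_I)
    show "supported_on A c" unfolding supported_on_def cdef using a1 by auto
    show "\<And>a. a \<in> A \<Longrightarrow> a \<noteq> a1 \<Longrightarrow> 0 \<le> c a" unfolding cdef by auto
    show "\<And>x. 0 \<le> x \<Longrightarrow> 0 \<le> signomial A c x"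
      by (rule sig_nonneg_coef) (use t in \<open>auto simp: cdef\<close>)
  qed
  show ?thesis
  proof (rule EXT[OF fin AGE_in_SAGE[OF fin a1 cAGE]])
    show "c \<noteq> (\<lambda>_. 0)"
    proof
      assume "c = (\<lambda>_. 0)"
      then have "c a1 = 0" by simp
      then show False using t unfolding cdef by simp
    qed
    fix I :: "(real \<times> bool) set" and b p i
    assume I: "finite I" and bp: "\<And>i. i \<in> I \<Longrightarrow> b i \<in> A \<and> p i \<in> AGE_cone {0..} A (b i)"
      and sm: "\<And>a. (\<Sum>i\<in>I. p i a) = c a" and i: "i \<in> I"
    note pf = pieces_facts[where A=A and I=I and b=b and p=p, OF fin I bp]
    have supp1: "\<And>a. p i a \<noteq> 0 \<Longrightarrow> a = a1"
    proof -
      fix a assume a: "p i a \<noteq> 0"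
      have aA: "a \<in> A" using pf(1) i a by blast
      obtain a' where a': "a' \<in> A" "a \<le> a'" "(\<Sum>i\<in>I. p i a') > 0"
        using FAM_MAX[where A=A and I=I and p=p and b=b, OF fin I pf(1) pf(2) pf(4) i a] by blast
      then have "a' = a1" using sm cdef by (auto split: if_splits)
      then show "a = a1" using a'(2) mn[OF aA] by simp
    qed
    have pa1: "p i a1 \<ge> 0"
    proof (rule ccontr)
      assume "\<not> p i a1 \<ge> 0"
      then have neg: "p i a1 < 0" by simp
      then have "b i = a1" using bp[OF i] a1 neg unfolding AGE_cone_def by force
      then obtain a where "a \<in> A" "a1 < a" "p i a \<noteq> 0" using pf(4) i neg by blast
      then show False using supp1 by force
    qed
    have "p i = (\<lambda>a. (p i a1 / t) * c a)"
    proof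
      fix a show "p i a = (p i a1 / t) * c a"
        using supp1[of a] t unfolding cdef by (cases "a = a1") auto
    qed
    then show "\<exists>s\<ge>0. p i = (\<lambda>a. s * c a)" using pa1 t by (intro exI[of _ "p i a1 / t"]) auto
  qed
qed

lemma GEN2:
  assumes fin: "finite A" and a1: "a1 \<in> A" and a2: "a2 \<in> A" and lt: "a1 < a2"
    and mn: "\<And>a. a \<in> A \<Longrightarrow> a \<le> a2 \<Longrightarrow> a = a1 \<or> a = a2" and t: "t > 0"
    and cdef: "c = (\<lambda>a. t * (if a = a2 then 1 else if a = a1 then -1 else 0))"
  shows "extreme_ray (SAGE_cone {0..} A) c"
proof -
  have c2: "c = (\<lambda>a. t * ev a2 a + (- t) * ev a1 a)" unfolding cdef ev_def using lt by auto
  have sigc: "\<And>x. signomial A c x = t * exp (a2 * x) - t * exp (a1 * x)"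
    unfolding c2 by (simp add: sig_add sig_diff sig_scale sig_ev fin a1 a2)
  have cAGE: "c \<in> AGE_cone {0..} A a1"
  proof (rule AGE_I)
    show "supported_on A c" unfolding supported_on_def cdef using a1 a2 by auto
    show "\<And>a. a \<in> A \<Longrightarrow> a \<noteq> a1 \<Longrightarrow> 0 \<le> c a" unfolding cdef using t by auto
    fix x :: real assume "0 \<le> x"
    then have "a1 * x \<le> a2 * x" using lt by (simp add: mult_right_mono)
    then show "0 \<le> signomial A c x" unfolding sigc using t by simp
  qed
  show ?thesis
  proof (rule EXT[OF fin AGE_in_SAGE[OF fin a1 cAGE]])
    show "c \<noteq> (\<lambda>_. 0)"
    proof
      assume "c = (\<lambda>_. 0)"
      then have "c a1 = 0" by simp
      then show False using t lt unfolding cdef by simp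
    qed
    fix I :: "(real \<times> bool) set" and b p i
    assume I: "finite I" and bp: "\<And>i. i \<in> I \<Longrightarrow> b i \<in> A \<and> p i \<in> AGE_cone {0..} A (b i)"
      and sm: "\<And>a. (\<Sum>i\<in>I. p i a) = c a" and i: "i \<in> I"
    note pf = pieces_facts[where A=A and I=I and b=b and p=p, OF fin I bp]
    have ceq: "c = (\<lambda>a. \<Sum>i\<in>I. p i a)" using sm by auto
    have sumsig: "(\<Sum>i\<in>I. signomial A (p i) 0) = 0" using sigc[of 0] unfolding ceq sig_sum by simp
    have z0: "signomial A (p i) 0 = 0"
      using sum_nonneg_eq_0_iff[OF I, of "\<lambda>i. signomial A (p i) 0"] sumsig pf(3) i by auto
    have supp1: "\<And>a. p i a \<noteq> 0 \<Longrightarrow> a = a1 \<or> a = a2"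
    proof -
      fix a assume a: "p i a \<noteq> 0"
      have aA: "a \<in> A" using pf(1) i a by blast
      obtain a' where a': "a' \<in> A" "a \<le> a'" "(\<Sum>i\<in>I. p i a') > 0"
        using FAM_MAX[where A=A and I=I and p=p and b=b, OF fin I pf(1) pf(2) pf(4) i a] by blast
      then have "a' = a2" using sm cdef t by (auto split: if_splits)
      then show "a = a1 \<or> a = a2" using a'(2) mn[OF aA] by simp
    qed
    have pa2: "p i a2 \<ge> 0"
    proof (rule ccontr)
      assume "\<not> p i a2 \<ge> 0"
      then have neg: "p i a2 < 0" by simp
      then have "b i = a2" using bp[OF i] a2 neg unfolding AGE_cone_def by force
      then obtain a where "a \<in> A" "a2 < a" "p i a \<noteq> 0" using pf(4) i neg by blast
      then show False using supp1 lt by force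
    qed
    have pe: "p i = (\<lambda>a. p i a2 * ev a2 a + p i a1 * ev a1 a)"
    proof
      fix a show "p i a = p i a2 * ev a2 a + p i a1 * ev a1 a"
        using supp1[of a] lt unfolding ev_def by auto
    qed
    have "signomial A (p i) 0 = p i a2 + p i a1"
      by (subst pe) (simp add: sig_add sig_scale sig_ev fin a1 a2)
    then have pa1: "p i a1 = - p i a2" using z0 by simp
    have "p i = (\<lambda>a. (p i a2 / t) * c a)"
    proof
      fix a show "p i a = (p i a2 / t) * c a"
        using supp1[of a] t pa1 lt unfolding cdef by auto
    qed
    then show "\<exists>s\<ge>0. p i = (\<lambda>a. s * c a)" using pa2 t by (intro exI[of _ "p i a2 / t"]) auto
  qed
qed



lemma NP2:
  assumes "extreme_ray K c" "g \<in> K" "(\<lambda>a. c a - g a) \<in> K" "g z \<noteq> 0" "c z' \<noteq> 0" "g z' = 0"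
  shows False
  using NP[OF assms(1,2,3) _ assms(4,5,6)] by simp

lemma AGE_moments:
  assumes "supported_on A h" "\<And>a. a \<in> A \<Longrightarrow> a \<noteq> \<beta> \<Longrightarrow> h a \<ge> 0"
    "signomial A h x0 = 0" "S1 A h x0 = 0"
  shows "h \<in> AGE_cone {0..} A \<beta>"
proof (rule AGE_I[OF assms(1)])
  show "\<And>a. a \<in> A \<Longrightarrow> a \<noteq> \<beta> \<Longrightarrow> 0 \<le> h a" by (rule assms(2))
  show "\<And>x. 0 \<le> x \<Longrightarrow> 0 \<le> signomial A h x" using G0[of A \<beta> h x0] assms by blast
qed

definition circ :: "real \<Rightarrow> real \<Rightarrow> real \<Rightarrow> real \<Rightarrow> real \<Rightarrow> real" where
  "circ x0 a b e = (\<lambda>z. if z = e then (b - a) * exp (- e * x0) else if z = b then - (e - a) * exp (- b * x0)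
      else if z = a then (e - b) * exp (- a * x0) else 0)"

lemma circ_props:
  assumes fin: "finite A" and mem: "a \<in> A" "b \<in> A" "e \<in> A" and ord: "a < b" "b < e"
  shows "signomial A (circ y a b e) y = 0" "S1 A (circ y a b e) y = 0"
    "supported_on A (circ y a b e)"
    "\<And>z. z \<in> A \<Longrightarrow> z \<noteq> b \<Longrightarrow> circ y a b e z \<ge> 0"
    "circ y a b e e > 0" "circ y a b e a > 0" "circ y a b e b < 0"
    "\<And>z. z \<noteq> a \<Longrightarrow> z \<noteq> b \<Longrightarrow> z \<noteq> e \<Longrightarrow> circ y a b e z = 0"
    "circ y a b e \<in> AGE_cone {0..} A b"
proof -
  have d: "a \<noteq> b" "a \<noteq> e" "b \<noteq> e" using ord by auto
  have ce: "circ y a b e = (\<lambda>z. if z = e then (b - a) * exp (- e * y) else if z = b then - (e - a) * exp (- b * y)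
      else if z = a then (e - b) * exp (- a * y) else 0)" unfolding circ_def ..
  have ex: "\<And>v. exp (- v * y) * exp (v * y) = 1" by (simp add: exp_add[symmetric])
  have "signomial A (circ y a b e) y = (b - a) * (exp (- e * y) * exp (e * y))
     - (e - a) * (exp (- b * y) * exp (b * y)) + (e - b) * (exp (- a * y) * exp (a * y))"
    unfolding ce sig3(1)[OF fin mem(1,2,3) d] by (simp add: algebra_simps)
  then show s0: "signomial A (circ y a b e) y = 0" unfolding ex by simp
  have "S1 A (circ y a b e) y = (b - a) * e * (exp (- e * y) * exp (e * y))
     - (e - a) * b * (exp (- b * y) * exp (b * y)) + (e - b) * a * (exp (- a * y) * exp (a * y))"
    unfolding ce sig3(2)[OF fin mem(1,2,3) d] by (simp add: algebra_simps)
  then show s1: "S1 A (circ y a b e) y = 0" unfolding ex by (simp add: algebra_simps)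
  show sp: "supported_on A (circ y a b e)" unfolding supported_on_def ce using mem by auto
  show cf: "\<And>z. z \<in> A \<Longrightarrow> z \<noteq> b \<Longrightarrow> circ y a b e z \<ge> 0" unfolding ce using ord by auto
  show "circ y a b e e > 0" "circ y a b e a > 0" "circ y a b e b < 0" unfolding ce using ord d
    by (auto simp: mult_less_0_iff)
  show "\<And>z. z \<noteq> a \<Longrightarrow> z \<noteq> b \<Longrightarrow> z \<noteq> e \<Longrightarrow> circ y a b e z = 0" unfolding ce by auto
  show "circ y a b e \<in> AGE_cone {0..} A b"
    by (rule AGE_moments[OF sp cf s0 s1])
qed

lemma AGE_two:
  assumes fin: "finite A" and mem: "w \<in> A" "u \<in> A" and lt: "w < u" and t: "t \<ge> 0"
  shows "(\<lambda>a. t * (if a = u then 1 else if a = w then -1 else 0)) \<in> AGE_cone {0..} A w"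
    "signomial A (\<lambda>a. t * (if a = u then 1 else if a = w then -1 else 0)) x = t * exp (u * x) - t * exp (w * x)"
    "S1 A (\<lambda>a. t * (if a = u then 1 else if a = w then -1 else 0)) x = t * u * exp (u * x) - t * w * exp (w * x)"
proof -
  let ?c = "\<lambda>a. t * (if a = u then 1 else if a = w then -1 else 0)"
  have c2: "?c = (\<lambda>a. t * ev u a + (- t) * ev w a)" unfolding ev_def using lt by auto
  show sigc: "\<And>x. signomial A ?c x = t * exp (u * x) - t * exp (w * x)"
    unfolding c2 by (simp add: sig_add sig_diff sig_scale sig_ev fin mem)
  show "S1 A ?c x = t * u * exp (u * x) - t * w * exp (w * x)"
    unfolding c2 by (simp add: S1_add S1_diff S1_scale S1_ev fin mem)
  show "?c \<in> AGE_cone {0..} A w"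
  proof (rule AGE_I)
    show "supported_on A ?c" unfolding supported_on_def using mem by auto
    show "\<And>a. a \<in> A \<Longrightarrow> a \<noteq> w \<Longrightarrow> 0 \<le> ?c a" using t by auto
    fix x :: real assume "0 \<le> x"
    then have "w * x \<le> u * x" using lt by (simp add: mult_right_mono)
    then show "0 \<le> signomial A ?c x" unfolding sigc using t by (simp add: mult_left_mono)
  qed
qed

lemma AGE_nonneg_coef:
  assumes "supported_on A p" "\<And>a. a \<in> A \<Longrightarrow> p a \<ge> 0"
  shows "p \<in> AGE_cone {0..} A b"
  by (rule AGE_I[OF assms(1)]) (auto intro: assms(2) sig_nonneg_coef)



lemma FWD_A:
  assumes fin: "finite A" and ext: "extreme_ray (SAGE_cone {0..} A) c"
    and cAGE: "c \<in> AGE_cone {0..} A \<beta>" and bA: "\<beta> \<in> A" and nb: "c \<beta> \<ge> 0"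
  shows "\<exists>t>0. c = (\<lambda>a. t * (if a = Min A then 1 else 0))"
proof -
  note cd = AGE_D[OF cAGE]
  have nn: "\<And>a. a \<in> A \<Longrightarrow> c a \<ge> 0" using cd(2) nb by (metis)
  have cnz: "c \<noteq> (\<lambda>_. 0)" using ext unfolding extreme_ray_def by blast
  then obtain z where "c z \<noteq> 0" by auto
  then have zA: "z \<in> A" and cz: "c z > 0" using cd(1) nn unfolding supported_on_def
    by (metis order_le_less)+
  have inK: "\<And>b p. b \<in> A \<Longrightarrow> p \<in> AGE_cone {0..} A b \<Longrightarrow> p \<in> SAGE_cone {0..} A"
    using AGE_in_SAGE[OF fin] by blast
  have one: "\<forall>z'\<in>A. z' \<noteq> z \<longrightarrow> c z' = 0"
  proof (rule ccontr)
    assume "\<not> ?thesis"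
    then obtain z' where z': "z' \<in> A" "z' \<noteq> z" "c z' \<noteq> 0" by blast
    let ?g = "\<lambda>a. if a = z then c z else 0"
    have g: "?g \<in> SAGE_cone {0..} A"
      by (rule inK[OF bA AGE_nonneg_coef]) (use zA cz in \<open>auto simp: supported_on_def\<close>)
    have h: "(\<lambda>a. c a - ?g a) \<in> SAGE_cone {0..} A"
      by (rule inK[OF bA AGE_nonneg_coef]) (use cd(1) nn in \<open>auto simp: supported_on_def\<close>)
    show False using NP2[OF ext g h, of z z'] cz z' by simp
  qed
  then have ceq: "c = (\<lambda>a. c z * (if a = z then 1 else 0))"
    using cd(1) unfolding supported_on_def by fastforce
  have mA: "Min A \<in> A" "Min A \<le> z" using fin zA by (auto intro: Min_in)
  show ?thesis
  proof (cases "z = Min A")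
    case True then show ?thesis using ceq cz by blast
  next
    case False
    then have lt: "Min A < z" using mA by simp
    let ?g = "\<lambda>a. c z * (if a = Min A then 1 else 0)"
    have g: "?g \<in> SAGE_cone {0..} A"
      by (rule inK[OF mA(1) AGE_nonneg_coef]) (use mA cz in \<open>auto simp: supported_on_def\<close>)
    have "(\<lambda>a. c a - ?g a) = (\<lambda>a. c z * (if a = z then 1 else if a = Min A then -1 else 0))"
      by (subst ceq) (use lt in auto)
    moreover have "(\<lambda>a. c z * (if a = z then 1 else if a = Min A then -1 else 0)) \<in> SAGE_cone {0..} A"
      using inK[OF mA(1) AGE_two(1)[OF fin mA(1) zA lt]] cz by simp
    ultimately have h: "(\<lambda>a. c a - ?g a) \<in> SAGE_cone {0..} A" by simp
    show ?thesis using NP2[OF ext g h, of "Min A" z] cz lt by simp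
  qed
qed

lemma FWD_B0:
  assumes fin: "finite A" and ext: "extreme_ray (SAGE_cone {0..} A) c"
    and cAGE: "c \<in> AGE_cone {0..} A \<beta>" and bA: "\<beta> \<in> A" and nb: "c \<beta> < 0"
  shows "\<exists>x0\<ge>0. signomial A c x0 = 0"
proof (rule ccontr)
  assume H: "\<not> ?thesis"
  note cd = AGE_D[OF cAGE]
  have pos: "\<And>x. x \<ge> 0 \<Longrightarrow> signomial A c x > 0" using H cd(3) by (metis atLeast_iff order_le_less)
  obtain u0 where u0: "u0 \<in> A" "u0 > \<beta>" "c u0 > 0"
    using PL[OF fin cd(1) _ cd(2) nb] cd(3) by auto
  define \<phi> where "\<phi> x = signomial A c x * exp (- \<beta> * x)" for x
  have \<phi>sum: "\<phi> x = (\<Sum>a\<in>A. c a * exp ((a - \<beta>) * x))" for x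
    unfolding \<phi>_def signomial_def sum_distrib_right
  proof (rule sum.cong)
    fix a
    have "exp (a * x) * exp (- \<beta> * x) = exp ((a - \<beta>) * x)" by (simp add: exp_add[symmetric] algebra_simps)
    then show "c a * exp (a * x) * exp (- \<beta> * x) = c a * exp ((a - \<beta>) * x)" by (simp add: mult.assoc)
  qed simp
  have \<phi>0: "\<phi> 0 > 0" using pos[of 0] unfolding \<phi>_def by simp
  have lb: "\<phi> x \<ge> c u0 * exp ((u0 - \<beta>) * x) + c \<beta>" for x
  proof -
    have "(\<Sum>a\<in>{u0, \<beta>}. c a * exp ((a - \<beta>) * x)) \<le> (\<Sum>a\<in>A. c a * exp ((a - \<beta>) * x))"
      using u0 bA cd(2) by (intro sum_mono2[OF fin]) auto
    then show ?thesis unfolding \<phi>sum using u0 by simp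
  qed
  define R where "R = max 0 (ln ((\<phi> 0 - c \<beta>) / c u0) / (u0 - \<beta>))"
  have R0: "R \<ge> 0" unfolding R_def by simp
  have big: "\<phi> x \<ge> \<phi> 0" if "x \<ge> R" for x
  proof -
    have q: "(\<phi> 0 - c \<beta>) / c u0 > 0" using \<phi>0 nb u0 by simp
    have "ln ((\<phi> 0 - c \<beta>) / c u0) / (u0 - \<beta>) \<le> R" unfolding R_def by simp
    then have "ln ((\<phi> 0 - c \<beta>) / c u0) \<le> (u0 - \<beta>) * R"
      using u0 by (simp add: pos_divide_le_eq mult.commute)
    also have "\<dots> \<le> (u0 - \<beta>) * x" using that u0 by (simp add: mult_left_mono)
    finally have "exp (ln ((\<phi> 0 - c \<beta>) / c u0)) \<le> exp ((u0 - \<beta>) * x)" by simp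
    then have "(\<phi> 0 - c \<beta>) / c u0 \<le> exp ((u0 - \<beta>) * x)" using q by simp
    then have "\<phi> 0 - c \<beta> \<le> c u0 * exp ((u0 - \<beta>) * x)" using u0 by (simp add: field_simps)
    then show ?thesis using lb[of x] by simp
  qed
  have cont: "continuous_on {0..R} \<phi>"
    unfolding \<phi>_def by (intro continuous_intros sig_cont[THEN continuous_on_subset]) auto
  obtain x1 where x1: "x1 \<in> {0..R}" "\<And>y. y \<in> {0..R} \<Longrightarrow> \<phi> x1 \<le> \<phi> y"
    using continuous_attains_inf[OF compact_Icc _ cont] R0 by auto
  have glob: "\<phi> x1 \<le> \<phi> y" if "y \<ge> 0" for y
  proof (cases "y \<le> R")
    case True then show ?thesis using x1 that by auto
  next
    case False
    then have "\<phi> y \<ge> \<phi> 0" using big by simp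
    moreover have "\<phi> x1 \<le> \<phi> 0" using x1(2)[of 0] R0 by simp
    ultimately show ?thesis by simp
  qed
  define m0 where "m0 = \<phi> x1"
  have m0p: "m0 > 0" unfolding m0_def \<phi>_def using pos[of x1] x1(1) by simp
  let ?g = "\<lambda>a. if a = \<beta> then m0 else 0"
  have inK: "\<And>b p. b \<in> A \<Longrightarrow> p \<in> AGE_cone {0..} A b \<Longrightarrow> p \<in> SAGE_cone {0..} A"
    using AGE_in_SAGE[OF fin] by blast
  have g: "?g \<in> SAGE_cone {0..} A"
    by (rule inK[OF bA AGE_nonneg_coef]) (use bA m0p in \<open>auto simp: supported_on_def\<close>)
  have gev: "?g = (\<lambda>a. m0 * ev \<beta> a)" unfolding ev_def by auto
  have h: "(\<lambda>a. c a - ?g a) \<in> SAGE_cone {0..} A"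
  proof (rule inK[OF bA AGE_I])
    show "supported_on A (\<lambda>a. c a - ?g a)" using cd(1) bA unfolding supported_on_def by auto
    show "\<And>a. a \<in> A \<Longrightarrow> a \<noteq> \<beta> \<Longrightarrow> 0 \<le> c a - ?g a" using cd(2) by auto
    fix x :: real assume x: "0 \<le> x"
    have "signomial A (\<lambda>a. c a - ?g a) x = signomial A c x - m0 * exp (\<beta> * x)"
      unfolding sig_diff gev sig_scale sig_ev[OF fin bA] ..
    also have "\<dots> = exp (\<beta> * x) * (\<phi> x - m0)"
      unfolding \<phi>_def by (simp add: algebra_simps exp_add[symmetric])
    also have "\<dots> \<ge> 0" using glob[OF x] unfolding m0_def by simp
    finally show "0 \<le> signomial A (\<lambda>a. c a - ?g a) x" .
  qed
  show False using NP2[OF ext g h, of \<beta> u0] m0p u0 by simp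
qed

lemma FWD_B1:
  assumes cAGE: "c \<in> AGE_cone {0..} A \<beta>" and x0: "x0 \<ge> 0" "signomial A c x0 = 0"
  shows "S1 A c x0 \<ge> 0" "x0 > 0 \<Longrightarrow> S1 A c x0 = 0"
proof -
  note cd = AGE_D[OF cAGE]
  show ge: "S1 A c x0 \<ge> 0" using S1_min[of x0 A c] cd(3) x0 by auto
  assume xp: "x0 > 0"
  show "S1 A c x0 = 0"
  proof (rule ccontr)
    assume "S1 A c x0 \<noteq> 0"
    then have "S1 A c x0 > 0" using ge by simp
    from DERIV_pos_inc_left[OF sig_deriv this] obtain d where d: "d > 0"
      "\<And>h. h > 0 \<Longrightarrow> h < d \<Longrightarrow> signomial A c (x0 - h) < signomial A c x0" by blast
    let ?h = "min d x0 / 2"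
    have "signomial A c (x0 - ?h) < 0" using d xp x0(2) by (intro d(2)[of ?h, simplified x0(2)]) auto
    moreover have "signomial A c (x0 - ?h) \<ge> 0" using cd(3) xp by auto
    ultimately show False by simp
  qed
qed


lemma NPsub:
  assumes fin: "finite A" and ext: "extreme_ray (SAGE_cone {0..} A) c"
    and bA: "\<beta> \<in> A" and b: "b \<in> A" and gA: "g \<in> AGE_cone {0..} A b"
    and sc: "supported_on A c" and le: "\<And>a. a \<in> A \<Longrightarrow> a \<noteq> \<beta> \<Longrightarrow> g a \<le> c a"
    and m: "signomial A c x0 = 0" "S1 A c x0 = 0" "signomial A g x0 = 0" "S1 A g x0 = 0"
    and z: "g z \<noteq> 0" "c z' \<noteq> 0" "g z' = 0"
  shows False
proof -
  have gK: "g \<in> SAGE_cone {0..} A" using AGE_in_SAGE[OF fin b gA] .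
  have "(\<lambda>a. c a - g a) \<in> AGE_cone {0..} A \<beta>"
  proof (rule AGE_moments)
    show "supported_on A (\<lambda>a. c a - g a)" using sc AGE_D(1)[OF gA] unfolding supported_on_def by auto
    show "\<And>a. a \<in> A \<Longrightarrow> a \<noteq> \<beta> \<Longrightarrow> 0 \<le> c a - g a" using le by simp
    show "signomial A (\<lambda>a. c a - g a) x0 = 0" "S1 A (\<lambda>a. c a - g a) x0 = 0"
      using m by (simp_all add: sig_diff S1_diff)
  qed
  then have hK: "(\<lambda>a. c a - g a) \<in> SAGE_cone {0..} A" using AGE_in_SAGE[OF fin bA] by blast
  show False using NP2[OF ext gK hK z] .
qed

lemma FWD_B2:
  assumes fin: "finite A" and ext: "extreme_ray (SAGE_cone {0..} A) c"
    and cAGE: "c \<in> AGE_cone {0..} A \<beta>" and bA: "\<beta> \<in> A" and nb: "c \<beta> < 0"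
    and z0: "signomial A c 0 = 0" and s1: "S1 A c 0 > 0"
  shows "\<exists>t>0. \<exists>u\<in>A. \<beta> = Min A \<and> \<beta> < u \<and> (\<forall>a\<in>A. a < u \<longrightarrow> a = \<beta>) \<and>
           c = (\<lambda>a. t * (if a = u then 1 else if a = \<beta> then -1 else 0))"
proof -
  note cd = AGE_D[OF cAGE]
  have inK: "\<And>b p. b \<in> A \<Longrightarrow> p \<in> AGE_cone {0..} A b \<Longrightarrow> p \<in> SAGE_cone {0..} A"
    using AGE_in_SAGE[OF fin] by blast
  obtain u0 where u0: "u0 \<in> A" "u0 > \<beta>" "c u0 > 0"
    using PL[OF fin cd(1) _ cd(2) nb] cd(3) by auto
  have noL: "\<forall>l\<in>A. l < \<beta> \<longrightarrow> c l = 0"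
  proof (rule ccontr)
    assume "\<not> ?thesis"
    then obtain l where l: "l \<in> A" "l < \<beta>" "c l \<noteq> 0" by blast
    define \<epsilon> where "\<epsilon> = min (c u0) (S1 A c 0 / (u0 - \<beta>))"
    have ep: "\<epsilon> > 0" unfolding \<epsilon>_def using u0 s1 by simp
    have ep1: "\<epsilon> \<le> c u0" unfolding \<epsilon>_def by simp
    have ep2: "\<epsilon> * (u0 - \<beta>) \<le> S1 A c 0"
      unfolding \<epsilon>_def using u0 by (simp add: min_def pos_le_divide_eq field_simps split: if_splits)
    let ?g = "\<lambda>a. \<epsilon> * (if a = u0 then 1 else if a = \<beta> then -1 else 0)"
    note tw = AGE_two[OF fin bA u0(1) u0(2), of \<epsilon>]
    have g: "?g \<in> SAGE_cone {0..} A" using inK[OF bA tw(1)] ep by simp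
    have h: "(\<lambda>a. c a - ?g a) \<in> SAGE_cone {0..} A"
    proof (rule inK[OF bA AGE_I])
      show "supported_on A (\<lambda>a. c a - ?g a)" using cd(1) bA u0 unfolding supported_on_def by auto
      show "\<And>a. a \<in> A \<Longrightarrow> a \<noteq> \<beta> \<Longrightarrow> 0 \<le> c a - ?g a" using cd(2) ep1 by auto
      fix x :: real assume x: "0 \<le> x"
      show "0 \<le> signomial A (\<lambda>a. c a - ?g a) x"
      proof (rule G1[of A \<beta> _ 0])
        show "\<And>a. a \<in> A \<Longrightarrow> a \<noteq> \<beta> \<Longrightarrow> 0 \<le> c a - ?g a" using cd(2) ep1 by auto
        show "0 \<le> signomial A (\<lambda>a. c a - ?g a) 0" using z0 ep by (simp add: sig_diff tw(2))
        have g0: "signomial A ?g 0 = 0" using ep by (simp add: tw(2))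
        have g1: "S1 A ?g 0 = \<epsilon> * (u0 - \<beta>)" using ep by (simp add: tw(3) algebra_simps)
        show "0 \<le> S1 A (\<lambda>a. c a - ?g a) 0 - \<beta> * signomial A (\<lambda>a. c a - ?g a) 0"
          unfolding sig_diff S1_diff g0 g1 z0 using ep2 by simp
      qed (use x in simp)
    qed
    show False using NP2[OF ext g h, of u0 l] ep l u0 by auto
  qed
  have two: "\<forall>a\<in>A. a \<noteq> u0 \<longrightarrow> a \<noteq> \<beta> \<longrightarrow> c a = 0"
  proof (rule ccontr)
    assume "\<not> ?thesis"
    then obtain u1 where u1: "u1 \<in> A" "u1 \<noteq> u0" "u1 \<noteq> \<beta>" "c u1 \<noteq> 0" by blast
    let ?g = "\<lambda>a. c u0 * (if a = u0 then 1 else if a = \<beta> then -1 else 0)"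
    note tw = AGE_two[OF fin bA u0(1) u0(2), of "c u0"]
    have g: "?g \<in> SAGE_cone {0..} A" using inK[OF bA tw(1)] u0 by simp
    have coefh: "\<And>a. a \<in> A \<Longrightarrow> a \<noteq> \<beta> \<Longrightarrow> 0 \<le> c a - ?g a" using cd(2) by auto
    have h: "(\<lambda>a. c a - ?g a) \<in> SAGE_cone {0..} A"
    proof (rule inK[OF bA AGE_I])
      show "supported_on A (\<lambda>a. c a - ?g a)" using cd(1) bA u0 unfolding supported_on_def by auto
      show "\<And>a. a \<in> A \<Longrightarrow> a \<noteq> \<beta> \<Longrightarrow> 0 \<le> c a - ?g a" by (rule coefh)
      fix x :: real assume x: "0 \<le> x"
      show "0 \<le> signomial A (\<lambda>a. c a - ?g a) x"
      proof (rule G1[of A \<beta> _ 0])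
        show "\<And>a. a \<in> A \<Longrightarrow> a \<noteq> \<beta> \<Longrightarrow> 0 \<le> c a - ?g a" by (rule coefh)
        have s0: "signomial A (\<lambda>a. c a - ?g a) 0 = 0" using z0 u0(3) by (simp add: sig_diff tw(2))
        then show "0 \<le> signomial A (\<lambda>a. c a - ?g a) 0" by simp
        have "S1 A (\<lambda>a. c a - ?g a) 0 - \<beta> * signomial A (\<lambda>a. c a - ?g a) 0
            = (\<Sum>a\<in>A. (c a - ?g a) * (a - \<beta>) * exp (a * 0))" by (rule S1_shift)
        also have "\<dots> \<ge> 0"
        proof (rule sum_nonneg)
          fix a assume a: "a \<in> A"
          show "0 \<le> (c a - ?g a) * (a - \<beta>) * exp (a * 0)"
          proof (cases "a < \<beta>")
            case True then show ?thesis using noL a u0 by auto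
          next
            case False
            then show ?thesis using coefh[OF a] by (cases "a = \<beta>") auto
          qed
        qed
        finally show "0 \<le> S1 A (\<lambda>a. c a - ?g a) 0 - \<beta> * signomial A (\<lambda>a. c a - ?g a) 0" .
      qed (use x in simp)
    qed
    show False using NP2[OF ext g h, of u0 u1] u0 u1 by auto
  qed
  define t where "t = c u0"
  have c2: "c = (\<lambda>a. c u0 * ev u0 a + c \<beta> * ev \<beta> a)"
  proof
    fix a show "c a = c u0 * ev u0 a + c \<beta> * ev \<beta> a"
      using two cd(1) u0 unfolding ev_def supported_on_def by (cases "a \<in> A") auto
  qed
  have "signomial A c 0 = c u0 + c \<beta>" by (subst c2) (simp add: sig_add sig_scale sig_ev fin u0(1) bA)
  then have cb: "c \<beta> = - t" using z0 unfolding t_def by simp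
  have ceq: "c = (\<lambda>a. t * (if a = u0 then 1 else if a = \<beta> then -1 else 0))"
  proof
    fix a show "c a = t * (if a = u0 then 1 else if a = \<beta> then -1 else 0)"
      using fun_cong[OF c2, of a] cb u0 unfolding t_def ev_def by auto
  qed
  have tp: "t > 0" unfolding t_def using u0 by simp
  have noB: "\<forall>b\<in>A. \<beta> < b \<longrightarrow> b < u0 \<longrightarrow> False"
  proof (intro ballI impI)
    fix b assume b: "b \<in> A" "\<beta> < b" "b < u0"
    let ?g = "\<lambda>a. t * (if a = u0 then 1 else if a = b then -1 else 0)"
    have g: "?g \<in> SAGE_cone {0..} A" using inK[OF b(1) AGE_two(1)[OF fin b(1) u0(1) b(3)]] tp by simp
    have "(\<lambda>a. c a - ?g a) = (\<lambda>a. t * (if a = b then 1 else if a = \<beta> then -1 else 0))"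
      unfolding ceq using b by auto
    moreover have "(\<lambda>a. t * (if a = b then 1 else if a = \<beta> then -1 else 0)) \<in> SAGE_cone {0..} A"
      using inK[OF bA AGE_two(1)[OF fin bA b(1) b(2)]] tp by simp
    ultimately have h: "(\<lambda>a. c a - ?g a) \<in> SAGE_cone {0..} A" by simp
    show False using NP2[OF ext g h, of u0 \<beta>] tp b u0 ceq by auto
  qed
  have noL2: "\<forall>l\<in>A. \<not> l < \<beta>"
  proof (intro ballI notI)
    fix l assume l: "l \<in> A" "l < \<beta>"
    define k where "k = t * (u0 - \<beta>) / (\<beta> - l)"
    have kp: "k > 0" unfolding k_def using tp l u0 by simp
    let ?g = "\<lambda>a. k * (if a = \<beta> then 1 else if a = l then -1 else 0)"
    have g: "?g \<in> SAGE_cone {0..} A" using inK[OF l(1) AGE_two(1)[OF fin l(1) bA l(2)]] kp by simp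
    have cp: "circ 0 l \<beta> u0 \<in> AGE_cone {0..} A \<beta>" using circ_props(9)[OF fin l(1) bA u0(1) l(2) u0(2)] .
    have "(\<lambda>a. c a - ?g a) = (\<lambda>a. (t / (\<beta> - l)) * circ 0 l \<beta> u0 a)"
    proof
      fix a
      have bl: "\<beta> - l > 0" using l by simp
      show "c a - ?g a = (t / (\<beta> - l)) * circ 0 l \<beta> u0 a"
        unfolding ceq circ_def k_def using l u0 bl by (auto simp: field_simps)
    qed
    moreover have "(\<lambda>a. (t / (\<beta> - l)) * circ 0 l \<beta> u0 a) \<in> SAGE_cone {0..} A"
      using inK[OF bA AGE_scale[OF cp, of "t / (\<beta> - l)"]] tp l by simp
    ultimately have h: "(\<lambda>a. c a - ?g a) \<in> SAGE_cone {0..} A" by simp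
    show False using NP2[OF ext g h, of \<beta> u0] kp l u0 ceq tp by auto
  qed
  have bmin: "\<beta> = Min A" using noL2 bA fin by (intro Min_eqI[symmetric]) (auto simp: not_less)
  have "\<forall>a\<in>A. a < u0 \<longrightarrow> a = \<beta>"
    using noB noL2 by (meson linorder_neqE_linordered_idom)
  then show ?thesis using bmin u0 tp ceq by blast
qed


lemma FWD_B3:
  assumes fin: "finite A" and ext: "extreme_ray (SAGE_cone {0..} A) c"
    and cAGE: "c \<in> AGE_cone {0..} A \<beta>" and bA: "\<beta> \<in> A" and nb: "c \<beta> < 0"
    and z0: "signomial A c x0 = 0" and s1: "S1 A c x0 = 0"
  shows "\<exists>l u. l \<in> A \<and> u \<in> A \<and> l < \<beta> \<and> \<beta> < u \<and>
           (\<forall>a\<in>A. l \<le> a \<and> a \<le> u \<longrightarrow> a = l \<or> a = \<beta> \<or> a = u) \<and> c l > 0 \<and> c u > 0 \<and>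
           c = (\<lambda>a. if a = u then c u else if a = \<beta> then c \<beta> else if a = l then c l else 0)"
proof -
  note cd = AGE_D[OF cAGE]
  have "c \<beta> \<noteq> 0" using nb by simp
  note pm = PM[OF fin cd(1) cd(2) z0 s1 this]
  obtain l where l: "l \<in> A" "l < \<beta>" "c l > 0" using pm(2) by blast
  obtain u0 where u0: "u0 \<in> A" "u0 > \<beta>" "c u0 > 0" using pm(3) by blast
  have three: "\<forall>a\<in>A. a \<noteq> l \<longrightarrow> a \<noteq> \<beta> \<longrightarrow> a \<noteq> u0 \<longrightarrow> c a = 0"
  proof (rule ccontr)
    assume "\<not> ?thesis"
    then obtain w where w: "w \<in> A" "w \<noteq> l" "w \<noteq> \<beta>" "w \<noteq> u0" "c w \<noteq> 0" by blast
    let ?f = "circ x0 l \<beta> u0"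
    note cp = circ_props[where y=x0, OF fin l(1) bA u0(1) l(2) u0(2)]
    define \<epsilon> where "\<epsilon> = min (c u0 / ?f u0) (c l / ?f l)"
    have ep: "\<epsilon> > 0" unfolding \<epsilon>_def using cp(5,6) u0 l by simp
    have ep1: "\<epsilon> * ?f u0 \<le> c u0" unfolding \<epsilon>_def using cp(5) by (simp add: min_def pos_le_divide_eq field_simps)
    have ep2: "\<epsilon> * ?f l \<le> c l" unfolding \<epsilon>_def using cp(6) by (simp add: min_def pos_le_divide_eq field_simps)
    show False
    proof (rule NPsub[OF fin ext bA bA AGE_scale[OF cp(9) less_imp_le[OF ep]] cd(1) _ z0 s1])
      fix a assume a: "a \<in> A" "a \<noteq> \<beta>"
      show "\<epsilon> * ?f a \<le> c a"
      proof (cases "a = u0 \<or> a = l")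
        case True then show ?thesis using ep1 ep2 by auto
      next
        case False then show ?thesis using cp(8)[of a] a cd(2) by simp
      qed
    next
      show "signomial A (\<lambda>a. \<epsilon> * ?f a) x0 = 0" "S1 A (\<lambda>a. \<epsilon> * ?f a) x0 = 0"
        using cp(1,2) by (simp_all add: sig_scale S1_scale)
      show "\<epsilon> * ?f u0 \<noteq> 0" using ep cp(5) by simp
      show "c w \<noteq> 0" by (rule w(5))
      show "\<epsilon> * ?f w = 0" using cp(8) w by simp
    qed
  qed
  have noU: "\<forall>b\<in>A. \<beta> < b \<longrightarrow> b < u0 \<longrightarrow> False"
  proof (intro ballI impI)
    fix b assume b: "b \<in> A" "\<beta> < b" "b < u0"
    let ?f = "circ x0 \<beta> b u0"
    note cp = circ_props[where y=x0, OF fin bA b(1) u0(1) b(2) b(3)]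
    define \<theta> where "\<theta> = c u0 / ?f u0"
    have th: "\<theta> > 0" unfolding \<theta>_def using cp(5) u0 by simp
    have cb: "c b = 0" using three b l by auto
    show False
    proof (rule NPsub[OF fin ext bA b(1) AGE_scale[OF cp(9) less_imp_le[OF th]] cd(1) _ z0 s1])
      fix a assume a: "a \<in> A" "a \<noteq> \<beta>"
      show "\<theta> * ?f a \<le> c a"
      proof (cases "a = u0")
        case True then show ?thesis unfolding \<theta>_def using cp(5) by simp
      next
        case F1: False
        show ?thesis
        proof (cases "a = b")
          case True then show ?thesis using cb th cp(7) by (simp add: mult_pos_neg less_imp_le)
        next
          case False then show ?thesis using cp(8)[of a] a F1 cd(2) by simp
        qed
      qed
    next
      show "signomial A (\<lambda>a. \<theta> * ?f a) x0 = 0" "S1 A (\<lambda>a. \<theta> * ?f a) x0 = 0"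
        using cp(1,2) by (simp_all add: sig_scale S1_scale)
      show "\<theta> * ?f u0 \<noteq> 0" using th cp(5) by simp
      show "c l \<noteq> 0" using l by simp
      show "\<theta> * ?f l = 0" using cp(8)[of l] l b by simp
    qed
  qed
  have noL: "\<forall>b\<in>A. l < b \<longrightarrow> b < \<beta> \<longrightarrow> False"
  proof (intro ballI impI)
    fix b assume b: "b \<in> A" "l < b" "b < \<beta>"
    let ?f = "circ x0 l b \<beta>"
    note cp = circ_props[where y=x0, OF fin l(1) b(1) bA b(2) b(3)]
    define \<theta> where "\<theta> = c l / ?f l"
    have th: "\<theta> > 0" unfolding \<theta>_def using cp(6) l by simp
    have cb: "c b = 0" using three b u0 by auto
    show False
    proof (rule NPsub[OF fin ext bA b(1) AGE_scale[OF cp(9) less_imp_le[OF th]] cd(1) _ z0 s1])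
      fix a assume a: "a \<in> A" "a \<noteq> \<beta>"
      show "\<theta> * ?f a \<le> c a"
      proof (cases "a = l")
        case True then show ?thesis unfolding \<theta>_def using cp(6) by simp
      next
        case F1: False
        show ?thesis
        proof (cases "a = b")
          case True then show ?thesis using cb th cp(7) by (simp add: mult_pos_neg less_imp_le)
        next
          case False then show ?thesis using cp(8)[of a] a F1 cd(2) by simp
        qed
      qed
    next
      show "signomial A (\<lambda>a. \<theta> * ?f a) x0 = 0" "S1 A (\<lambda>a. \<theta> * ?f a) x0 = 0"
        using cp(1,2) by (simp_all add: sig_scale S1_scale)
      show "\<theta> * ?f l \<noteq> 0" using th cp(6) by simp
      show "c u0 \<noteq> 0" using u0 by simp
      show "\<theta> * ?f u0 = 0" using cp(8)[of u0] u0 b by simp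
    qed
  qed
  have adj: "\<forall>a\<in>A. l \<le> a \<and> a \<le> u0 \<longrightarrow> a = l \<or> a = \<beta> \<or> a = u0"
  proof (intro ballI impI)
    fix a assume a: "a \<in> A" "l \<le> a \<and> a \<le> u0"
    show "a = l \<or> a = \<beta> \<or> a = u0"
    proof (rule ccontr)
      assume n: "\<not> ?thesis"
      then have "l < a" "a < u0" using a by auto
      show False
      proof (cases "a < \<beta>")
        case True then show False using noL a(1) \<open>l < a\<close> by blast
      next
        case False then have "\<beta> < a" using n by simp
        then show False using noU a(1) \<open>a < u0\<close> by blast
      qed
    qed
  qed
  have ceq: "c = (\<lambda>a. if a = u0 then c u0 else if a = \<beta> then c \<beta> else if a = l then c l else 0)"
  proof
    fix a show "c a = (if a = u0 then c u0 else if a = \<beta> then c \<beta> else if a = l then c l else 0)"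
      using three cd(1) unfolding supported_on_def by (cases "a \<in> A") auto
  qed
  show ?thesis using l u0 adj ceq by blast
qed



lemma BWD3:
  assumes fin: "finite A" and mem: "l \<in> A" "\<beta> \<in> A" "u \<in> A" and ord: "l < \<beta>" "\<beta> < u"
    and adj: "\<And>a. a \<in> A \<Longrightarrow> l \<le> a \<Longrightarrow> a \<le> u \<Longrightarrow> a = l \<or> a = \<beta> \<or> a = u"
    and pos: "cp > 0" "cm > 0" "t > 0"
    and rat: "cm / cp \<ge> ((u - \<beta>) / (u - l)) / ((\<beta> - l) / (u - l))"
    and cidef: "ci = - ((cm / ((u - \<beta>) / (u - l))) powr ((u - \<beta>) / (u - l)) *
                       (cp / ((\<beta> - l) / (u - l))) powr ((\<beta> - l) / (u - l)))"
    and cdef: "c = (\<lambda>a. t * (if a = u then cp else if a = \<beta> then ci else if a = l then cm else 0))"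
  shows "extreme_ray (SAGE_cone {0..} A) c"
proof -
  define q where "q = (cm * (\<beta> - l)) / (cp * (u - \<beta>))"
  have qp: "q > 0" unfolding q_def using pos ord by simp
  define x0 where "x0 = ln q / (u - l)"
  have eq: "exp ((u - l) * x0) = q" unfolding x0_def using qp ord by simp
  have bal: "cp * (u - \<beta>) * exp (u * x0) = cm * (\<beta> - l) * exp (l * x0)"
  proof -
    have "exp (u * x0) = q * exp (l * x0)" using eq by (simp add: exp_add[symmetric] algebra_simps flip: eq)
    then show ?thesis unfolding q_def using pos ord by (simp add: field_simps)
  qed
  note pw = POW[OF ord pos(1,2) bal]
  have x0p: "x0 \<ge> 0" using pw(2) rat by simp
  have ci: "ci = - ((cp * exp (u * x0) + cm * exp (l * x0)) * exp (- \<beta> * x0))"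
    using cidef pw(1) by simp
  have ebb: "exp (- \<beta> * x0) * exp (\<beta> * x0) = 1" by (simp add: exp_add[symmetric])
  have cie: "ci * exp (\<beta> * x0) = - (cp * exp (u * x0) + cm * exp (l * x0))"
    unfolding ci using ebb by (simp add: mult.assoc)
  have d: "l \<noteq> \<beta>" "l \<noteq> u" "\<beta> \<noteq> u" using ord by auto
  have c2: "c = (\<lambda>a. if a = u then t * cp else if a = \<beta> then t * ci else if a = l then t * cm else 0)"
    unfolding cdef by auto
  note s3 = sig3[OF fin mem d, of "t * cp" "t * ci" "t * cm" x0]
  show ?thesis
  proof (rule GEN3[OF fin mem ord adj c2 _ _ x0p])
    show "t * cp > 0" "t * cm > 0" using pos by auto
    have "t * cp * exp (u * x0) + t * ci * exp (\<beta> * x0) + t * cm * exp (l * x0)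
        = t * (ci * exp (\<beta> * x0) + (cp * exp (u * x0) + cm * exp (l * x0)))" by (simp add: algebra_simps)
    also have "\<dots> = 0" using cie by simp
    finally show "signomial A c x0 = 0" unfolding c2 s3(1) .
    have "t * cp * u * exp (u * x0) + t * ci * \<beta> * exp (\<beta> * x0) + t * cm * l * exp (l * x0)
        = t * (cp * u * exp (u * x0) + \<beta> * (ci * exp (\<beta> * x0)) + cm * l * exp (l * x0))"
      by (simp add: algebra_simps)
    also have "\<dots> = t * (cp * u * exp (u * x0) - \<beta> * (cp * exp (u * x0) + cm * exp (l * x0)) + cm * l * exp (l * x0))"
      unfolding cie by (simp add: algebra_simps)
    also have "\<dots> = t * (cp * (u - \<beta>) * exp (u * x0) - cm * (\<beta> - l) * exp (l * x0))"
      by (simp add: algebra_simps)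
    also have "\<dots> = 0" using bal by simp
    finally show "S1 A c x0 = 0" unfolding c2 s3(2) .
  qed
qed


lemma FWD3conv:
  fixes l \<beta> u cp cm ci x0 :: real
  assumes ord: "l < \<beta>" "\<beta> < u" and pos: "cp > 0" "cm > 0" and x0: "x0 \<ge> 0"
    and e0: "cp * exp (u * x0) + ci * exp (\<beta> * x0) + cm * exp (l * x0) = 0"
    and e1: "cp * u * exp (u * x0) + ci * \<beta> * exp (\<beta> * x0) + cm * l * exp (l * x0) = 0"
  shows "ci = - ((cm / ((u - \<beta>) / (u - l))) powr ((u - \<beta>) / (u - l)) *
                 (cp / ((\<beta> - l) / (u - l))) powr ((\<beta> - l) / (u - l)))"
    "cm / cp \<ge> ((u - \<beta>) / (u - l)) / ((\<beta> - l) / (u - l))"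
proof -
  have cie: "ci * exp (\<beta> * x0) = - (cp * exp (u * x0) + cm * exp (l * x0))" using e0 by (smt (verit))
  have r: "ci * \<beta> * exp (\<beta> * x0) = \<beta> * (ci * exp (\<beta> * x0))" by (simp add: mult_ac)
  have "cp * u * exp (u * x0) + \<beta> * (ci * exp (\<beta> * x0)) + cm * l * exp (l * x0) = 0"
    using e1 unfolding r by (simp only:)
  then have "cp * u * exp (u * x0) - \<beta> * (cp * exp (u * x0) + cm * exp (l * x0)) + cm * l * exp (l * x0) = 0"
    unfolding cie by (simp add: algebra_simps)
  then have bal: "cp * (u - \<beta>) * exp (u * x0) = cm * (\<beta> - l) * exp (l * x0)" by (simp add: algebra_simps)
  note pw = POW[OF ord pos bal]
  show "cm / cp \<ge> ((u - \<beta>) / (u - l)) / ((\<beta> - l) / (u - l))" using pw(2) x0 by simp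
  have "ci = ci * exp (\<beta> * x0) * exp (- \<beta> * x0)" by (simp add: mult.assoc exp_add[symmetric])
  also have "\<dots> = - ((cp * exp (u * x0) + cm * exp (l * x0)) * exp (- \<beta> * x0))" unfolding cie by (simp add: algebra_simps)
  finally show "ci = - ((cm / ((u - \<beta>) / (u - l))) powr ((u - \<beta>) / (u - l)) *
                 (cp / ((\<beta> - l) / (u - l))) powr ((\<beta> - l) / (u - l)))" unfolding pw(1) .
qed

theorem proposition6p1:
  fixes \<alpha> :: "nat \<Rightarrow> real" and m :: nat
  assumes "m \<ge> 1"
    and "\<And>i j. 1 \<le> i \<Longrightarrow> i < j \<Longrightarrow> j \<le> m \<Longrightarrow> \<alpha> i < \<alpha> j"
  shows "extreme_ray (SAGE_cone {0..} (\<alpha> ` {1..m})) c \<longleftrightarrow>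
    (\<exists>t>0.
       c = (\<lambda>a. t * (if a = \<alpha> 1 then 1 else 0))
     \<or> (m \<ge> 2 \<and> c = (\<lambda>a. t * (if a = \<alpha> 2 then 1 else if a = \<alpha> 1 then -1 else 0)))
     \<or> (\<exists>i cp cm. 2 \<le> i \<and> i \<le> m - 1 \<and> cp > 0 \<and> cm > 0 \<and>
          (let lp = (\<alpha> i - \<alpha> (i - 1)) / (\<alpha> (i + 1) - \<alpha> (i - 1));
               lm = (\<alpha> (i + 1) - \<alpha> i) / (\<alpha> (i + 1) - \<alpha> (i - 1));
               ci = - ((cm / lm) powr lm * (cp / lp) powr lp)
           in cm / cp \<ge> lm / lp \<and>
              c = (\<lambda>a. t * (if a = \<alpha> (i + 1) then cp else if a = \<alpha> i then ci
                             else if a = \<alpha> (i - 1) then cm else 0)))))"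
proof -
  let ?A = "\<alpha> ` {1..m}"
  have fin: "finite ?A" by simp
  have lt_iff: "\<And>i j. i \<in> {1..m} \<Longrightarrow> j \<in> {1..m} \<Longrightarrow> \<alpha> i < \<alpha> j \<longleftrightarrow> i < j"
  proof -
    fix i j :: nat assume i: "i \<in> {1..m}" and j: "j \<in> {1..m}"
    show "\<alpha> i < \<alpha> j \<longleftrightarrow> i < j"
    proof
      assume "\<alpha> i < \<alpha> j"
      show "i < j"
      proof (rule ccontr)
        assume "\<not> i < j"
        then have "j = i \<or> j < i" by auto
        then show False using assms(2)[of j i] i j \<open>\<alpha> i < \<alpha> j\<close> by auto
      qed
    next
      assume "i < j" then show "\<alpha> i < \<alpha> j" using assms(2)[of i j] i j by auto
    qed
  qed
  have eq_iff: "\<And>i j. i \<in> {1..m} \<Longrightarrow> j \<in> {1..m} \<Longrightarrow> \<alpha> i = \<alpha> j \<longleftrightarrow> i = j"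
    using lt_iff by (metis linorder_neqE_nat less_irrefl)
  have le_iff: "\<And>i j. i \<in> {1..m} \<Longrightarrow> j \<in> {1..m} \<Longrightarrow> \<alpha> i \<le> \<alpha> j \<longleftrightarrow> i \<le> j"
    using lt_iff by (meson not_le)
  have one: "1 \<in> {1..m}" using assms(1) by simp
  have A1: "\<alpha> 1 \<in> ?A" using one by simp
  have minA: "Min ?A = \<alpha> 1"
  proof (rule Min_eqI[OF fin _ A1])
    fix a assume "a \<in> ?A"
    then obtain j where j: "j \<in> {1..m}" "a = \<alpha> j" by blast
    then show "\<alpha> 1 \<le> a" using le_iff[OF one j(1)] by simp
  qed
  show ?thesis
  proof (rule iffI, goal_cases)
    case 1
    then have ext: "extreme_ray (SAGE_cone {0..} ?A) c" .
    obtain \<beta> where bA: "\<beta> \<in> ?A" and cAGE: "c \<in> AGE_cone {0..} ?A \<beta>" using step1[OF fin ext] by blast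
    show ?case
    proof (cases "c \<beta> \<ge> 0")
      case True
      then obtain t where "t > 0" "c = (\<lambda>a. t * (if a = Min ?A then 1 else 0))"
        using FWD_A[OF fin ext cAGE bA] by blast
      then show ?thesis unfolding minA by blast
    next
      case False
      then have nb: "c \<beta> < 0" by simp
      obtain x0 where x0: "x0 \<ge> 0" "signomial ?A c x0 = 0" using FWD_B0[OF fin ext cAGE bA nb] by blast
      note b1 = FWD_B1[OF cAGE x0]
      show ?thesis
      proof (cases "S1 ?A c x0 = 0")
        case False
        then have s1p: "S1 ?A c x0 > 0" using b1(1) by simp
        then have "x0 = 0" using b1(2) x0(1) False by force
        then obtain t u where tu: "t > 0" "u \<in> ?A" "\<beta> = Min ?A" "\<beta> < u" "\<forall>a\<in>?A. a < u \<longrightarrow> a = \<beta>"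
          "c = (\<lambda>a. t * (if a = u then 1 else if a = \<beta> then -1 else 0))"
          using FWD_B2[OF fin ext cAGE bA nb] x0 s1p by auto
        obtain j where j: "j \<in> {1..m}" "u = \<alpha> j" using tu(2) by blast
        have "j \<noteq> 1" using tu(3,4) j minA by auto
        then have j2: "j \<ge> 2" using j by simp
        then have m2: "m \<ge> 2" using j by simp
        have two: "2 \<in> {1..m}" using m2 by simp
        have "j = 2"
        proof (rule ccontr)
          assume "j \<noteq> 2"
          then have "\<alpha> 2 < u" using lt_iff[OF two j(1)] j j2 by simp
          then have "\<alpha> 2 = \<alpha> 1" using tu(5) two tu(3) minA by auto
          then show False using eq_iff[OF two one] by simp
        qed
        have b1: "\<beta> = \<alpha> 1" using tu(3) minA by simp
        have "c = (\<lambda>a. t * (if a = \<alpha> 2 then 1 else if a = \<alpha> 1 then -1 else 0))"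
          unfolding b1[symmetric] using tu(6) j \<open>j = 2\<close> by simp
        then show ?thesis using tu(1) m2 by blast
      next
        case True
        obtain l u where lu: "l \<in> ?A" "u \<in> ?A" "l < \<beta>" "\<beta> < u"
          "\<forall>a\<in>?A. l \<le> a \<and> a \<le> u \<longrightarrow> a = l \<or> a = \<beta> \<or> a = u" "c l > 0" "c u > 0"
          "c = (\<lambda>a. if a = u then c u else if a = \<beta> then c \<beta> else if a = l then c l else 0)"
          using FWD_B3[OF fin ext cAGE bA nb x0(2) True] by blast
        obtain k where k: "k \<in> {1..m}" "\<beta> = \<alpha> k" using bA by blast
        obtain k1 where k1: "k1 \<in> {1..m}" "l = \<alpha> k1" using lu(1) by blast
        obtain k2 where k2: "k2 \<in> {1..m}" "u = \<alpha> k2" using lu(2) by blast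
        have kk1: "k1 < k" using lt_iff[OF k1(1) k(1)] lu(3) k k1 by simp
        have kk2: "k < k2" using lt_iff[OF k(1) k2(1)] lu(4) k k2 by simp
        have km: "k - 1 \<in> {1..m}" "k + 1 \<in> {1..m}" using kk1 kk2 k k1 k2 by auto
        have "k1 = k - 1"
        proof (rule ccontr)
          assume "k1 \<noteq> k - 1"
          then have "k1 < k - 1" using kk1 by simp
          then have "l < \<alpha> (k - 1)" "\<alpha> (k - 1) < \<beta>"
            using lt_iff[OF k1(1) km(1)] lt_iff[OF km(1) k(1)] k k1 kk1 by auto
          then show False using lu(5) km(1) lu(4) by force
        qed
        have "k2 = k + 1"
        proof (rule ccontr)
          assume "k2 \<noteq> k + 1"
          then have "k + 1 < k2" using kk2 by simp
          then have "\<alpha> (k + 1) < u" "\<beta> < \<alpha> (k + 1)"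
            using lt_iff[OF km(2) k2(1)] lt_iff[OF k(1) km(2)] k k2 by auto
          then show False using lu(5) km(2) lu(3) by force
        qed
        have ki: "2 \<le> k" "k \<le> m - 1" using kk1 kk2 k1 k2 \<open>k1 = k - 1\<close> \<open>k2 = k + 1\<close> by auto
        have dd: "l \<noteq> \<beta>" "l \<noteq> u" "\<beta> \<noteq> u" using lu(3,4) by auto
        note s3 = sig3[OF fin lu(1) bA lu(2) dd, of "c u" "c \<beta>" "c l" x0]
        have e0: "c u * exp (u * x0) + c \<beta> * exp (\<beta> * x0) + c l * exp (l * x0) = 0"
          using x0(2) s3(1) lu(8) by simp
        have e1: "c u * u * exp (u * x0) + c \<beta> * \<beta> * exp (\<beta> * x0) + c l * l * exp (l * x0) = 0"
          using True s3(2) lu(8) by simp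
        note fc = FWD3conv[OF lu(3,4) lu(7,6) x0(1) e0 e1]
        have lk: "l = \<alpha> (k - 1)" "u = \<alpha> (k + 1)"
          using k1 k2 \<open>k1 = k - 1\<close> \<open>k2 = k + 1\<close> by auto
        have "\<exists>i cp cm. 2 \<le> i \<and> i \<le> m - 1 \<and> cp > 0 \<and> cm > 0 \<and>
          (let lp = (\<alpha> i - \<alpha> (i - 1)) / (\<alpha> (i + 1) - \<alpha> (i - 1));
               lm = (\<alpha> (i + 1) - \<alpha> i) / (\<alpha> (i + 1) - \<alpha> (i - 1));
               ci = - ((cm / lm) powr lm * (cp / lp) powr lp)
           in cm / cp \<ge> lm / lp \<and>
              c = (\<lambda>a. 1 * (if a = \<alpha> (i + 1) then cp else if a = \<alpha> i then ci
                             else if a = \<alpha> (i - 1) then cm else 0)))"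
        proof (rule exI[of _ k], rule exI[of _ "c u"], rule exI[of _ "c l"])
          have ce: "c = (\<lambda>a. 1 * (if a = u then c u else if a = \<beta> then c \<beta> else if a = l then c l else 0))"
            using lu(8) by simp
          show "2 \<le> k \<and> k \<le> m - 1 \<and> c u > 0 \<and> c l > 0 \<and>
          (let lp = (\<alpha> k - \<alpha> (k - 1)) / (\<alpha> (k + 1) - \<alpha> (k - 1));
               lm = (\<alpha> (k + 1) - \<alpha> k) / (\<alpha> (k + 1) - \<alpha> (k - 1));
               ci = - ((c l / lm) powr lm * (c u / lp) powr lp)
           in c l / c u \<ge> lm / lp \<and>
              c = (\<lambda>a. 1 * (if a = \<alpha> (k + 1) then c u else if a = \<alpha> k then ci
                             else if a = \<alpha> (k - 1) then c l else 0)))"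
            unfolding Let_def lk[symmetric] k(2)[symmetric] fc(1)[symmetric]
            using ki lu(6,7) fc(2) ce by blast
        qed
        then show ?thesis by (intro exI[of _ 1]) auto
      qed
    qed
  next
    case 2
    then obtain t where t: "t > 0" and D: "c = (\<lambda>a. t * (if a = \<alpha> 1 then 1 else 0))
     \<or> (m \<ge> 2 \<and> c = (\<lambda>a. t * (if a = \<alpha> 2 then 1 else if a = \<alpha> 1 then -1 else 0)))
     \<or> (\<exists>i cp cm. 2 \<le> i \<and> i \<le> m - 1 \<and> cp > 0 \<and> cm > 0 \<and>
          (let lp = (\<alpha> i - \<alpha> (i - 1)) / (\<alpha> (i + 1) - \<alpha> (i - 1));
               lm = (\<alpha> (i + 1) - \<alpha> i) / (\<alpha> (i + 1) - \<alpha> (i - 1));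
               ci = - ((cm / lm) powr lm * (cp / lp) powr lp)
           in cm / cp \<ge> lm / lp \<and>
              c = (\<lambda>a. t * (if a = \<alpha> (i + 1) then cp else if a = \<alpha> i then ci
                             else if a = \<alpha> (i - 1) then cm else 0))))" by blast
    show ?case
    proof (cases "c = (\<lambda>a. t * (if a = \<alpha> 1 then 1 else 0))")
      case True
      show ?thesis
      proof (rule GEN1[OF fin A1 _ t True])
        fix a assume "a \<in> ?A" then show "\<alpha> 1 \<le> a" using minA fin by (metis Min_le)
      qed
    next
      case F1: False
      show ?thesis
      proof (cases "m \<ge> 2 \<and> c = (\<lambda>a. t * (if a = \<alpha> 2 then 1 else if a = \<alpha> 1 then -1 else 0))")
        case True
        then have m2: "m \<ge> 2" and ceq: "c = (\<lambda>a. t * (if a = \<alpha> 2 then 1 else if a = \<alpha> 1 then -1 else 0))"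
          by auto
        have two: "2 \<in> {1..m}" using m2 by simp
        have A2: "\<alpha> 2 \<in> ?A" using two by simp
        have lt12: "\<alpha> 1 < \<alpha> 2" using lt_iff[OF one two] by simp
        show ?thesis
        proof (rule GEN2[OF fin A1 A2 lt12 _ t ceq])
          fix a assume a: "a \<in> ?A" "a \<le> \<alpha> 2"
          then obtain j where j: "j \<in> {1..m}" "a = \<alpha> j" by blast
          then have "j \<le> 2" using le_iff[OF j(1) two] a by simp
          then have "j = 1 \<or> j = 2" using j by auto
          then show "a = \<alpha> 1 \<or> a = \<alpha> 2" using j by auto
        qed
      next
        case F2: False
        then obtain i cp cm where ic: "2 \<le> i" "i \<le> m - 1" "cp > 0" "cm > 0"
          and L: "(let lp = (\<alpha> i - \<alpha> (i - 1)) / (\<alpha> (i + 1) - \<alpha> (i - 1));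
               lm = (\<alpha> (i + 1) - \<alpha> i) / (\<alpha> (i + 1) - \<alpha> (i - 1));
               ci = - ((cm / lm) powr lm * (cp / lp) powr lp)
           in cm / cp \<ge> lm / lp \<and>
              c = (\<lambda>a. t * (if a = \<alpha> (i + 1) then cp else if a = \<alpha> i then ci
                             else if a = \<alpha> (i - 1) then cm else 0)))" using D F1 by blast
        have im: "i - 1 \<in> {1..m}" "i \<in> {1..m}" "i + 1 \<in> {1..m}" using ic by auto
        have o1: "\<alpha> (i - 1) < \<alpha> i" using lt_iff[OF im(1) im(2)] ic by simp
        have o2: "\<alpha> i < \<alpha> (i + 1)" using lt_iff[OF im(2) im(3)] by simp
        have adj: "\<And>a. a \<in> ?A \<Longrightarrow> \<alpha> (i - 1) \<le> a \<Longrightarrow> a \<le> \<alpha> (i + 1) \<Longrightarrow>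
            a = \<alpha> (i - 1) \<or> a = \<alpha> i \<or> a = \<alpha> (i + 1)"
        proof -
          fix a assume a: "a \<in> ?A" "\<alpha> (i - 1) \<le> a" "a \<le> \<alpha> (i + 1)"
          then obtain j where j: "j \<in> {1..m}" "a = \<alpha> j" by blast
          have "i - 1 \<le> j" "j \<le> i + 1" using le_iff[OF im(1) j(1)] le_iff[OF j(1) im(3)] a j by auto
          then have "j = i - 1 \<or> j = i \<or> j = i + 1" using ic by auto
          then show "a = \<alpha> (i - 1) \<or> a = \<alpha> i \<or> a = \<alpha> (i + 1)" using j by auto
        qed
        have d1: "\<alpha> (i + 1) - \<alpha> (i - 1) \<noteq> 0" using o1 o2 by simp
        show ?thesis
          apply (rule BWD3[OF fin _ _ _ o1 o2 adj ic(3,4) t])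
          using L im unfolding Let_def by auto
      qed
    qed
  qed
qed


end
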